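(* Let $n\geq 2$ and $M>2n$ be integers, $\Omega>0$, $\omega_q=-\Omega+(q-1)\frac{2\Omega}{M-1}$, $q=1,\dots,M$. Let $\mu=\sum_{j=1}^n a_j\delta_{y_j}$ with $a_j\in\mathbb C\setminus\{0\}$ and pairwise distinct $y_j\in I(n,\Omega):=\big[-\frac{(n-1)\pi}{2\Omega},\frac{(n-1)\pi}{2\Omega}\big]$, $m_{\min}=\min_j|a_j|$, $d_{\min}=\min_{p\neq j}|y_p-y_j|$, and let $\mathbf Y=[\mu]+\mathbf W$ with $\|\mathbf W\|_\infty<\sigma$. Assume $$d_{\min}\geq \frac{5.88\pi e}{\Omega}\Big(\frac{\sigma}{m_{\min}}\Big)^{\frac{1}{2n-1}}.$$ If $\hat\mu=\sum_{j=1}^n\hat a_j\delta_{\hat y_j}$ with $\hat y_j\in I(n,\Omega)$ satisfies $\|[\hat\mu]-\mathbf Y\|_\infty<\sigma$, then $\hat\mu$ is within the $\frac{d_{\min}}{2}$-neighborhood of $\mu$, and after reordering the $\hat y_j$, $$|\hat y_j-y_j|\leq \frac{C(n)}{\Omega}\,SRF^{2n-2}\,\frac{\sigma}{m_{\min}},\qquad 1\le j\le n,$$ where $SRF=\frac{\pi}{\Omega d_{\min}}$ and $C(n)=n\,2^{4n-2}e^{2n}\pi^{-1/2}$.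
   Context: For a discrete measure $\nu=\sum_j b_j\delta_{x_j}$ on $\mathbb R$, $\mathcal F\nu(\omega)=\sum_j b_je^{ix_j\omega}$ and $[\nu]=(\mathcal F\nu(\omega_1),\dots,\mathcal F\nu(\omega_M))^T\in\mathbb C^M$. Given $\mu=\sum_{j=1}^n a_j\delta_{y_j}$ and $\delta>0$ such that the intervals $(y_k-\delta,y_k+\delta)$, $1\le k\le n$, are pairwise disjoint, a measure $\hat\mu=\sum_{j=1}^n\hat a_j\delta_{\hat y_j}$ is within the $\delta$-neighborhood of $\mu$ if each $\hat y_j$ lies in one and only one of these $n$ intervals. *)

theory Defs
  imports "HOL-Analysis.Analysis"
begin

text \<open>A discrete measure with n atoms is given by weights a and locations y, indexed by 1..n.\<close>

definition FT :: "(nat \<Rightarrow> complex) \<Rightarrow> (nat \<Rightarrow> real) \<Rightarrow> nat \<Rightarrow> real \<Rightarrow> complex" where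
  "FT a y n \<omega> = (\<Sum>j=1..n. a j * exp (\<i> * complex_of_real (y j * \<omega>)))"

definition sample_pt :: "real \<Rightarrow> nat \<Rightarrow> nat \<Rightarrow> real" where
  "sample_pt \<Omega> M q = - \<Omega> + (real q - 1) * (2 * \<Omega> / (real M - 1))"

definition sup_dist :: "(nat \<Rightarrow> complex) \<Rightarrow> (nat \<Rightarrow> real) \<Rightarrow> nat \<Rightarrow> real \<Rightarrow> nat \<Rightarrow> (nat \<Rightarrow> complex) \<Rightarrow> real" where
  "sup_dist a y n \<Omega> M Y = Max ((\<lambda>q. cmod (FT a y n (sample_pt \<Omega> M q) - Y q)) ` {1..M})"

definition d_min :: "(nat \<Rightarrow> real) \<Rightarrow> nat \<Rightarrow> real" where
  "d_min y n = Min {\<bar>y p - y j\<bar> | p j. p \<in> {1..n} \<and> j \<in> {1..n} \<and> p \<noteq> j}"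

definition m_min :: "(nat \<Rightarrow> complex) \<Rightarrow> nat \<Rightarrow> real" where
  "m_min a n = Min ((\<lambda>j. cmod (a j)) ` {1..n})"

definition I_int :: "nat \<Rightarrow> real \<Rightarrow> real set" where
  "I_int n \<Omega> = {- (real n - 1) * pi / (2 * \<Omega>) .. (real n - 1) * pi / (2 * \<Omega>)}"

definition within_nbhd :: "(nat \<Rightarrow> real) \<Rightarrow> nat \<Rightarrow> real \<Rightarrow> (nat \<Rightarrow> real) \<Rightarrow> bool" where
  "within_nbhd y n \<delta> yh \<longleftrightarrow>
     (\<forall>k\<in>{1..n}. \<forall>l\<in>{1..n}. k \<noteq> l \<longrightarrow> {y k - \<delta> <..< y k + \<delta>} \<inter> {y l - \<delta> <..< y l + \<delta>} = {}) \<and>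
     (\<forall>j\<in>{1..n}. \<exists>!k. k \<in> {1..n} \<and> yh j \<in> {y k - \<delta> <..< y k + \<delta>})"

definition C_const :: "nat \<Rightarrow> real" where
  "C_const n = real n * 2 ^ (4 * n - 2) * exp (2 * real n) / sqrt pi"

end

theory Submission
  imports Defs "HOL-Computational_Algebra.Polynomial"
begin


fun Dop :: "complex list \<Rightarrow> (nat \<Rightarrow> complex) \<Rightarrow> nat \<Rightarrow> complex" where
  "Dop [] u = u"
| "Dop (w # ws) u = Dop ws (\<lambda>r. u (Suc r) - w * u r)"

lemma Dop_sum:
  "Dop ws (\<lambda>r. \<Sum>l\<in>L. c l * z l ^ r) = (\<lambda>r. \<Sum>l\<in>L. c l * (\<Prod>w\<leftarrow>ws. z l - w) * z l ^ r)"
proof (induction ws arbitrary: c)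
  case Nil
  then show ?case by simp
next
  case (Cons w ws)
  have "(\<lambda>r. (\<Sum>l\<in>L. c l * z l ^ Suc r) - w * (\<Sum>l\<in>L. c l * z l ^ r))
      = (\<lambda>r. \<Sum>l\<in>L. (c l * (z l - w)) * z l ^ r)"
    by (auto simp: sum_distrib_left sum_subtractf[symmetric] algebra_simps intro!: sum.cong ext)
  then show ?case using Cons[of "\<lambda>l. c l * (z l - w)"] by (simp add: mult.assoc)
qed

lemma Dop_diff: "Dop ws (\<lambda>r. u r - v r) = (\<lambda>r. Dop ws u r - Dop ws v r)"
proof (induction ws arbitrary: u v)
  case Nil
  then show ?case by simp
next
  case (Cons w ws)
  have "(\<lambda>r. u (Suc r) - v (Suc r) - w * (u r - v r)) = (\<lambda>r. (u (Suc r) - w * u r) - (v (Suc r) - w * v r))"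
    by (auto simp: algebra_simps)
  then show ?case using Cons by simp
qed

lemma Dop_bound:
  assumes "\<forall>w\<in>set ws. norm w \<le> 1" "\<forall>r\<le>R + length ws. norm (u r) \<le> B" "r \<le> R"
  shows "norm (Dop ws u r) \<le> 2 ^ length ws * B"
  using assms
proof (induction ws arbitrary: u B)
  case Nil
  then show ?case by simp
next
  case (Cons w ws)
  have "\<forall>r\<le>R + length ws. norm (u (Suc r) - w * u r) \<le> 2 * B"
  proof (intro allI impI)
    fix r assume r: "r \<le> R + length ws"
    have "norm (u (Suc r) - w * u r) \<le> norm (u (Suc r)) + norm w * norm (u r)"
      by (metis norm_mult norm_triangle_ineq4)
    also have "\<dots> \<le> B + 1 * B"
      using Cons.prems r by (intro add_mono mult_mono) auto
    finally show "norm (u (Suc r) - w * u r) \<le> 2 * B" by simp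
  qed
  then have "norm (Dop ws (\<lambda>r. u (Suc r) - w * u r) r) \<le> 2 ^ length ws * (2 * B)"
    using Cons by auto
  then show ?case by simp
qed



lemma jordan_ineq:
  fixes x :: real
  assumes "0 \<le> x" "x \<le> pi/2"
  shows "2/pi * x \<le> sin x"
proof (rule ccontr)
  assume neg: "\<not> 2/pi * x \<le> sin x"
  define g where "g = (\<lambda>t::real. sin t - 2/pi * t)"
  have gd: "\<And>t. DERIV g t :> cos t - 2/pi"
    unfolding g_def by (auto intro!: derivative_eq_intros)
  have x0: "x \<noteq> 0" using neg by auto
  have x1: "x \<noteq> pi/2"
  proof
    assume h: "x = pi/2" then have "2/pi * x = 1" by simp
    moreover have "sin x = 1" unfolding h by (rule sin_pi_half)
    ultimately
    show False using neg by simp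
  qed
  have gx: "g x < 0" using neg by (simp add: g_def)
  have "0 < x" "x < pi/2" using assms x0 x1 by auto
  obtain z1 where z1: "0 < z1" "z1 < x" "g x - g 0 = (x - 0) * (cos z1 - 2/pi)"
    using MVT2[of 0 x g "\<lambda>t. cos t - 2/pi"] \<open>0 < x\<close> gd by blast
  obtain z2 where z2: "x < z2" "z2 < pi/2" "g (pi/2) - g x = (pi/2 - x) * (cos z2 - 2/pi)"
    using MVT2[of x "pi/2" g "\<lambda>t. cos t - 2/pi"] \<open>x < pi/2\<close> gd by blast
  have g0: "g 0 = 0" and gp: "g (pi/2) = 0" by (auto simp: g_def)
  have "cos z1 - 2/pi < 0"
  proof -
    have "x * (cos z1 - 2/pi) < 0" using z1(3) g0 gx by simp
    then show ?thesis using \<open>0 < x\<close> by (simp add: mult_less_0_iff)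
  qed
  moreover have "cos z2 - 2/pi > 0"
  proof -
    have "(pi/2 - x) * (cos z2 - 2/pi) > 0" using z2(3) gp gx by simp
    then show ?thesis using \<open>x < pi/2\<close> by (simp add: zero_less_mult_iff)
  qed
  moreover have "cos z2 \<le> cos z1"
    using z1 z2 by (intro cos_monotone_0_pi_le) auto
  ultimately show False by simp
qed

lemma chord_bound:
  fixes a b :: real
  assumes "\<bar>a - b\<bar> \<le> pi"
  shows "2/pi * \<bar>a - b\<bar> \<le> cmod (exp (\<i> * of_real a) - exp (\<i> * of_real b))"
proof -
  have "exp (\<i> * of_real a) - exp (\<i> * of_real b) = exp (\<i> * of_real b) * (exp (\<i> * of_real (a - b)) - 1)"
    by (simp add: algebra_simps exp_add[symmetric])
  then have "cmod (exp (\<i> * of_real a) - exp (\<i> * of_real b)) = 2 * \<bar>sin ((a - b)/2)\<bar>"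
    using dist_exp_i_1[of "a - b"] by (simp add: norm_mult)
  also have "\<bar>sin ((a - b)/2)\<bar> = sin (\<bar>a - b\<bar>/2)"
  proof (cases "a \<ge> b")
    case True
    then have "0 \<le> sin ((a - b)/2)" using assms by (intro sin_ge_zero) auto
    then show ?thesis using True by simp
  next
    case False
    then have "0 \<le> sin ((b - a)/2)" using assms by (intro sin_ge_zero) auto
    moreover have "sin ((a - b)/2) = - sin ((b - a)/2)"
      by (metis minus_diff_eq minus_divide_left sin_minus)
    ultimately show ?thesis using False by simp
  qed
  also have "2/pi * (\<bar>a - b\<bar>/2) \<le> sin (\<bar>a - b\<bar>/2)"
    using assms by (intro jordan_ineq) auto
  ultimately show ?thesis by simp
qed



lemma sep_max:
  fixes y :: "nat \<Rightarrow> real"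
  assumes "finite P" "\<forall>p\<in>P. y p - c \<ge> d" "\<forall>p\<in>P. \<forall>q\<in>P. p \<noteq> q \<longrightarrow> \<bar>y p - y q\<bar> \<ge> d" "P \<noteq> {}"
  shows "\<exists>p\<in>P. y p - c \<ge> real (card P) * d"
  using assms
proof (induction "card P" arbitrary: P)
  case 0
  then show ?case by simp
next
  case (Suc k)
  have fin: "finite (y ` P)" using Suc.prems by simp
  have ne: "y ` P \<noteq> {}" using Suc.prems by simp
  obtain p0 where p0: "p0 \<in> P" "y p0 = Max (y ` P)" using Max_in[OF fin ne] by auto
  have p0max: "\<forall>p\<in>P. y p \<le> y p0" using p0 fin by auto
  show ?case
  proof (cases "P - {p0} = {}")
    case True
    then have "P = {p0}" using p0 by auto
    then show ?thesis using Suc.prems by auto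
  next
    case False
    have ck: "k = card (P - {p0})" using Suc.hyps p0 Suc.prems by simp
    have ex: "\<exists>p1\<in>P - {p0}. y p1 - c \<ge> real (card (P - {p0})) * d"
      by (rule Suc.hyps(1)[OF ck]) (use Suc.prems False in auto)
    obtain p1 where p1: "p1 \<in> P - {p0}" "y p1 - c \<ge> real k * d"
      using ex ck by auto
    have "\<bar>y p0 - y p1\<bar> \<ge> d" using Suc.prems p0 p1 by auto
    moreover have "y p1 \<le> y p0" using p0max p1 by auto
    ultimately have "y p0 - y p1 \<ge> d" by simp
    then have "y p0 - c \<ge> real (Suc k) * d" using p1 by (simp add: algebra_simps)
    then show ?thesis using p0 Suc.hyps by metis
  qed
qed

lemma sep_prod:
  fixes y :: "nat \<Rightarrow> real"
  assumes "finite P" "\<forall>p\<in>P. y p - c \<ge> d" "\<forall>p\<in>P. \<forall>q\<in>P. p \<noteq> q \<longrightarrow> \<bar>y p - y q\<bar> \<ge> d" "d > 0"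
  shows "d ^ card P * fact (card P) \<le> (\<Prod>p\<in>P. y p - c)"
  using assms
proof (induction "card P" arbitrary: P)
  case 0
  then show ?case by simp
next
  case (Suc k)
  have fin: "finite (y ` P)" using Suc.prems by simp
  have ne: "P \<noteq> {}" using Suc.hyps by auto
  then have ne': "y ` P \<noteq> {}" by simp
  obtain p0 where p0: "p0 \<in> P" "y p0 = Max (y ` P)" using Max_in[OF fin ne'] by auto
  have p0max: "\<forall>p\<in>P. y p \<le> y p0" using p0 fin by auto
  obtain p where p: "p \<in> P" "y p - c \<ge> real (card P) * d"
    using sep_max[where P=P and y=y and c=c and d=d] Suc.prems ne by auto
  have big: "y p0 - c \<ge> real (Suc k) * d" using p p0max Suc.hyps by force
  have ck: "k = card (P - {p0})" using Suc.hyps p0 Suc.prems by simp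
  have IH: "d ^ k * fact k \<le> (\<Prod>p\<in>P - {p0}. y p - c)"
    using Suc.hyps(1)[OF ck] Suc.prems by (simp add: ck)
  have "(\<Prod>p\<in>P. y p - c) = (y p0 - c) * (\<Prod>p\<in>P - {p0}. y p - c)"
    using prod.remove[OF Suc.prems(1) p0(1)] by simp
  moreover have "(y p0 - c) * (\<Prod>p\<in>P - {p0}. y p - c) \<ge> (real (Suc k) * d) * (d ^ k * fact k)"
    using big IH Suc.prems(4) Suc.prems(2) p0(1) by (intro mult_mono) force+
  moreover have "(real (Suc k) * d) * (d ^ k * fact k) = d ^ card P * fact (card P)"
    using Suc.hyps(2)[symmetric] by (simp add: algebra_simps)
  ultimately show ?case by simp
qed

lemma card_split:
  fixes y :: "nat \<Rightarrow> real"
  assumes sep: "\<forall>p\<in>{1..n}. \<forall>q\<in>{1..n}. p \<noteq> q \<longrightarrow> \<bar>y p - y q\<bar> \<ge> d" and d: "d > 0" and j: "j \<in> {1..n}"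
  shows "{1..n} - {j} = {p\<in>{1..n}. y j < y p} \<union> {p\<in>{1..n}. y p < y j}"
    and "card {p\<in>{1..n}. y j < y p} + card {p\<in>{1..n}. y p < y j} = n - 1"
proof -
  show eq: "{1..n} - {j} = {p\<in>{1..n}. y j < y p} \<union> {p\<in>{1..n}. y p < y j}"
  proof
    show "{1..n} - {j} \<subseteq> {p\<in>{1..n}. y j < y p} \<union> {p\<in>{1..n}. y p < y j}"
    proof
      fix p assume p: "p \<in> {1..n} - {j}"
      then have "\<bar>y p - y j\<bar> \<ge> d" using sep j by auto
      then have "y p \<noteq> y j" using d by auto
      then show "p \<in> {p\<in>{1..n}. y j < y p} \<union> {p\<in>{1..n}. y p < y j}" using p by auto
    qed
  qed auto
  have "card ({p\<in>{1..n}. y j < y p} \<union> {p\<in>{1..n}. y p < y j}) = card {p\<in>{1..n}. y j < y p} + card {p\<in>{1..n}. y p < y j}"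
    by (rule card_Un_disjoint) auto
  then show "card {p\<in>{1..n}. y j < y p} + card {p\<in>{1..n}. y p < y j} = n - 1"
    using eq[symmetric] j by simp
qed


lemma gprime_lower:
  fixes y :: "nat \<Rightarrow> real"
  assumes sep: "\<forall>p\<in>{1..n}. \<forall>q\<in>{1..n}. p \<noteq> q \<longrightarrow> \<bar>y p - y q\<bar> \<ge> d" and d: "d > 0" and j: "j \<in> {1..n}"
  shows "d ^ (n - 1) * (fact (card {p\<in>{1..n}. y j < y p}) * fact (card {p\<in>{1..n}. y p < y j}))
           \<le> \<bar>\<Prod>p\<in>{1..n} - {j}. y j - y p\<bar>"
proof -
  define Pp where "Pp = {p\<in>{1..n}. y j < y p}"
  define Pm where "Pm = {p\<in>{1..n}. y p < y j}"
  have eq: "{1..n} - {j} = Pp \<union> Pm" and cs: "card Pp + card Pm = n - 1"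
    using card_split[OF sep d j] by (auto simp: Pp_def Pm_def)
  have "\<bar>\<Prod>p\<in>{1..n} - {j}. y j - y p\<bar> = (\<Prod>p\<in>{1..n} - {j}. \<bar>y j - y p\<bar>)"
    by (rule abs_prod)
  also have "\<dots> = (\<Prod>p\<in>Pp. \<bar>y j - y p\<bar>) * (\<Prod>p\<in>Pm. \<bar>y j - y p\<bar>)"
    unfolding eq by (rule prod.union_disjoint) (auto simp: Pp_def Pm_def)
  also have "(\<Prod>p\<in>Pp. \<bar>y j - y p\<bar>) = (\<Prod>p\<in>Pp. y p - y j)"
    by (rule prod.cong) (auto simp: Pp_def)
  also have "(\<Prod>p\<in>Pm. \<bar>y j - y p\<bar>) = (\<Prod>p\<in>Pm. (- y p) - (- y j))"
    by (rule prod.cong) (auto simp: Pm_def)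
  finally have E: "\<bar>\<Prod>p\<in>{1..n} - {j}. y j - y p\<bar> = (\<Prod>p\<in>Pp. y p - y j) * (\<Prod>p\<in>Pm. (- y p) - (- y j))" .
  have A: "d ^ card Pp * fact (card Pp) \<le> (\<Prod>p\<in>Pp. y p - y j)"
  proof (rule sep_prod)
    show "\<forall>p\<in>Pp. d \<le> y p - y j"
    proof
      fix p assume "p \<in> Pp"
      then have p: "p \<in> {1..n}" "y j < y p" by (auto simp: Pp_def)
      then have "p \<noteq> j" by auto
      then have "d \<le> \<bar>y p - y j\<bar>" using sep p(1) j by blast
      then show "d \<le> y p - y j" using p(2) by simp
    qed
    show "\<forall>p\<in>Pp. \<forall>q\<in>Pp. p \<noteq> q \<longrightarrow> d \<le> \<bar>y p - y q\<bar>" using sep unfolding Pp_def by blast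
  qed (use d in \<open>auto simp: Pp_def\<close>)
  have B: "d ^ card Pm * fact (card Pm) \<le> (\<Prod>p\<in>Pm. (- y p) - (- y j))"
  proof (rule sep_prod[where y="\<lambda>p. - y p"])
    show "\<forall>p\<in>Pm. d \<le> - y p - - y j"
    proof
      fix p assume "p \<in> Pm"
      then have p: "p \<in> {1..n}" "y p < y j" by (auto simp: Pm_def)
      then have "p \<noteq> j" by auto
      then have "d \<le> \<bar>y p - y j\<bar>" using sep p(1) j by blast
      then show "d \<le> - y p - - y j" using p(2) by simp
    qed
    show "\<forall>p\<in>Pm. \<forall>q\<in>Pm. p \<noteq> q \<longrightarrow> d \<le> \<bar>- y p - - y q\<bar>" using sep unfolding Pm_def by (simp add: abs_minus_commute)
  qed (use d in \<open>auto simp: Pm_def\<close>)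
  have "d ^ (n - 1) * (fact (card Pp) * fact (card Pm)) = (d ^ card Pp * fact (card Pp)) * (d ^ card Pm * fact (card Pm))"
    using cs[symmetric] by (simp add: power_add algebra_simps)
  also have "\<dots> \<le> (\<Prod>p\<in>Pp. y p - y j) * (\<Prod>p\<in>Pm. (- y p) - (- y j))"
  proof (rule mult_mono[OF A B])
    have "0 \<le> d ^ card Pp * fact (card Pp)" using d by simp
    then show "0 \<le> (\<Prod>p\<in>Pp. y p - y j)" using A by linarith
    show "0 \<le> d ^ card Pm * fact (card Pm)" using d by simp
  qed
  finally show ?thesis using E by (simp add: Pp_def Pm_def)
qed


lemma rank_bij:
  fixes y :: "nat \<Rightarrow> real"
  assumes sep: "\<forall>p\<in>{1..n}. \<forall>q\<in>{1..n}. p \<noteq> q \<longrightarrow> \<bar>y p - y q\<bar> \<ge> d" and d: "d > 0"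
  shows "bij_betw (\<lambda>j. card {p\<in>{1..n}. y j < y p}) {1..n} {..<n}"
proof -
  define A where "A = (\<lambda>j. card {p\<in>{1..n}. y j < y p})"
  have lt: "A j < A i" if "i \<in> {1..n}" "j \<in> {1..n}" "y i < y j" for i j
  proof -
    have "{p\<in>{1..n}. y j < y p} \<subset> {p\<in>{1..n}. y i < y p}"
      using that by auto
    then show ?thesis unfolding A_def by (intro psubset_card_mono) auto
  qed
  have inj: "inj_on A {1..n}"
  proof (rule inj_onI)
    fix i j assume i: "i \<in> {1..n}" and j: "j \<in> {1..n}" and e: "A i = A j"
    show "i = j"
    proof (rule ccontr)
      assume "i \<noteq> j"
      then have "\<bar>y i - y j\<bar> \<ge> d" using sep i j by auto
      then have "y i < y j \<or> y j < y i" using d by auto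
      then show False using lt[OF i j] lt[OF j i] e by auto
    qed
  qed
  have sub: "A ` {1..n} \<subseteq> {..<n}"
  proof
    fix k assume "k \<in> A ` {1..n}"
    then obtain j where j: "j \<in> {1..n}" "k = A j" by auto
    have "A j \<le> n - 1" using card_split(2)[OF sep d j(1)] unfolding A_def by linarith
    then show "k \<in> {..<n}" using j by auto
  qed
  have "card (A ` {1..n}) = n" using card_image[OF inj] by simp
  then have "A ` {1..n} = {..<n}" using sub by (intro card_subset_eq) auto
  then show ?thesis using inj unfolding A_def bij_betw_def by simp
qed

lemma sum_fact_sq:
  assumes "n \<ge> 1"
  shows "(\<Sum>k<n. 1 / (fact k * fact (n - 1 - k))^2 :: real) = real ((2*(n-1)) choose (n-1)) / (fact (n-1))^2"
proof -
  define N where "N = n - 1"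
  have n: "n = Suc N" using assms N_def by simp
  have "(\<Sum>k<n. 1 / (fact k * fact (n - 1 - k))^2 :: real) = (\<Sum>k\<le>N. real ((N choose k)^2) / (fact N)^2)"
  proof -
    have "{..<n} = {..N}" using n by auto
    moreover have "1 / (fact k * fact (N - k))^2 = real ((N choose k)^2) / (fact N)^2" if "k \<le> N" for k
    proof -
      have h: "(fact N :: real) = fact k * fact (N - k) * real (N choose k)"
        using binomial_fact_lemma[OF that] by (metis of_nat_fact of_nat_mult)
      have c: "real (N choose k) \<noteq> 0" using that by simp
      have "real ((N choose k)^2) / (fact N)^2 = (real (N choose k))^2 / ((fact k * fact (N-k))^2 * (real (N choose k))^2)"
        unfolding h by (simp add: power_mult_distrib)
      also have "\<dots> = 1 / (fact k * fact (N - k))^2" using c by simp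
      finally show ?thesis by simp
    qed
    ultimately show ?thesis by (simp add: N_def)
  qed
  also have "\<dots> = real (\<Sum>k\<le>N. (N choose k)^2) / (fact N)^2"
    by (simp add: sum_divide_distrib)
  also have "\<dots> = real ((2*N) choose N) / (fact N)^2" by (simp add: choose_square_sum)
  finally show ?thesis by (simp add: N_def)
qed



lemma lagrange_id:
  fixes yh y :: "nat \<Rightarrow> real"
  assumes inj: "inj_on y {1..n}" and n: "n \<ge> 1"
  shows "(\<Prod>q\<in>{1..n}. x - yh q) - (\<Prod>p\<in>{1..n}. x - y p) =
     (\<Sum>j\<in>{1..n}. (\<Prod>q\<in>{1..n}. y j - yh q) / (\<Prod>p\<in>{1..n}-{j}. y j - y p) * (\<Prod>p\<in>{1..n}-{j}. x - y p))"
proof -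
  define c where "c j = (\<Prod>q\<in>{1..n}. y j - yh q) / (\<Prod>p\<in>{1..n}-{j}. y j - y p)" for j
  define F where "F = (\<Prod>q\<in>{1..n}. [:- yh q, 1:])"
  define G where "G = (\<Prod>q\<in>{1..n}. [:- y q, 1:])"
  define L where "L = (\<Sum>j\<in>{1..n}. smult (c j) (\<Prod>p\<in>{1..n}-{j}. [:- y p, 1:]))"
  define R where "R = F - G - L"
  have pF: "poly F t = (\<Prod>q\<in>{1..n}. t - yh q)" for t by (simp add: F_def poly_prod)
  have pG: "poly G t = (\<Prod>q\<in>{1..n}. t - y q)" for t by (simp add: G_def poly_prod)
  have pL: "poly L t = (\<Sum>j\<in>{1..n}. c j * (\<Prod>p\<in>{1..n}-{j}. t - y p))" for t
    by (simp add: L_def poly_sum poly_prod)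
  have degF: "degree F = n"
    unfolding F_def by (subst degree_prod_eq_sum_degree) auto
  have lcF: "lead_coeff F = 1" unfolding F_def by (simp add: lead_coeff_prod)
  have degG: "degree G = n"
    unfolding G_def by (subst degree_prod_eq_sum_degree) auto
  have lcG: "lead_coeff G = 1" unfolding G_def by (simp add: lead_coeff_prod)
  have degL: "degree L \<le> n - 1"
    unfolding L_def
  proof (rule degree_sum_le)
    fix j assume j: "j \<in> {1..n}"
    have "degree (\<Prod>p\<in>{1..n}-{j}. [:- y p, 1:]) \<le> (\<Sum>p\<in>{1..n}-{j}. degree [:- y p, 1:])"
      by (rule degree_prod_sum_le[unfolded o_def]) simp
    also have "\<dots> = n - 1" using j by simp
    finally show "degree (smult (c j) (\<Prod>p\<in>{1..n}-{j}. [:- y p, 1:])) \<le> n - 1"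
      using degree_smult_le order_trans by blast
  qed simp
  have degR: "degree R \<le> n - 1"
  proof (rule degree_le, intro allI impI)
    fix i assume i: "n - 1 < i"
    have "coeff F i = coeff G i"
    proof (cases "i = n")
      case True
      then show ?thesis using lcF lcG degF degG by simp
    next
      case False
      then have "i > n" using i by simp
      then show ?thesis using degF degG by (simp add: coeff_eq_0)
    qed
    moreover have "coeff L i = 0" using degL i by (simp add: coeff_eq_0)
    ultimately show "coeff R i = 0" by (simp add: R_def)
  qed
  have roots: "poly R (y k) = 0" if k: "k \<in> {1..n}" for k
  proof -
    have ne: "y k - y p \<noteq> 0" if p: "p \<in> {1..n}-{k}" for p
    proof
      assume "y k - y p = 0"
      then have "y k = y p" by simp
      then have "k = p" using inj k p by (metis DiffD1 inj_onD)
      then show False using p by simp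
    qed
    have g0: "(\<Prod>p\<in>{1..n}-{k}. y k - y p) \<noteq> 0"
      using ne by (subst prod_zero_iff) auto
    have "poly L (y k) = c k * (\<Prod>p\<in>{1..n}-{k}. y k - y p)"
    proof -
      have "(\<Sum>j\<in>{1..n}. c j * (\<Prod>p\<in>{1..n}-{j}. y k - y p)) = c k * (\<Prod>p\<in>{1..n}-{k}. y k - y p)
            + (\<Sum>j\<in>{1..n}-{k}. c j * (\<Prod>p\<in>{1..n}-{j}. y k - y p))"
        by (rule sum.remove[OF finite_atLeastAtMost k])
      moreover have "(\<Sum>j\<in>{1..n}-{k}. c j * (\<Prod>p\<in>{1..n}-{j}. y k - y p)) = 0"
      proof (rule sum.neutral, intro ballI)
        fix j assume "j \<in> {1..n}-{k}"
        then have "k \<in> {1..n}-{j}" using k by auto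
        then have "(\<Prod>p\<in>{1..n}-{j}. y k - y p) = 0" by (intro prod_zero) force+
        then show "c j * (\<Prod>p\<in>{1..n}-{j}. y k - y p) = 0" by simp
      qed
      ultimately show ?thesis using pL by simp
    qed
    also have "\<dots> = (\<Prod>q\<in>{1..n}. y k - yh q)" using g0 by (simp add: c_def)
    finally have "poly L (y k) = (\<Prod>q\<in>{1..n}. y k - yh q)" .
    moreover have "poly G (y k) = 0" unfolding pG using k by (intro prod_zero) force+
    ultimately show ?thesis by (simp add: R_def pF)
  qed
  have "R = 0"
  proof (rule ccontr)
    assume R0: "R \<noteq> 0"
    have "y ` {1..n} \<subseteq> {x. poly R x = 0}" using roots by auto
    then have "card (y ` {1..n}) \<le> card {x. poly R x = 0}"
      using poly_roots_finite[OF R0] by (intro card_mono) auto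
    also have "\<dots> \<le> degree R" by (rule card_poly_roots_bound[OF R0])
    finally have "n \<le> degree R" using card_image[OF inj] by simp
    then show False using degR n by simp
  qed
  then have "poly R x = 0" by simp
  then show ?thesis by (simp add: R_def pF pG pL c_def)
qed



lemma lag_bound:
  fixes yh y :: "nat \<Rightarrow> real"
  assumes inj: "inj_on y {1..n}" and n: "n \<ge> 1" and rho: "\<rho> > 0"
    and far: "\<forall>k\<in>{1..n}. \<bar>x - y k\<bar> \<ge> \<rho>"
  shows "\<bar>(\<Prod>q\<in>{1..n}. x - yh q) - (\<Prod>p\<in>{1..n}. x - y p)\<bar> \<le>
     (\<Sum>j\<in>{1..n}. \<bar>\<Prod>q\<in>{1..n}. y j - yh q\<bar> / \<bar>\<Prod>p\<in>{1..n}-{j}. y j - y p\<bar>) / \<rho> * \<bar>\<Prod>p\<in>{1..n}. x - y p\<bar>"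
proof -
  have part: "\<bar>\<Prod>p\<in>{1..n}-{j}. x - y p\<bar> \<le> \<bar>\<Prod>p\<in>{1..n}. x - y p\<bar> / \<rho>" if j: "j \<in> {1..n}" for j
  proof -
    have "(\<Prod>p\<in>{1..n}. x - y p) = (x - y j) * (\<Prod>p\<in>{1..n}-{j}. x - y p)"
      by (rule prod.remove[OF finite_atLeastAtMost j])
    then have e: "\<bar>\<Prod>p\<in>{1..n}. x - y p\<bar> = \<bar>x - y j\<bar> * \<bar>\<Prod>p\<in>{1..n}-{j}. x - y p\<bar>"
      by (simp add: abs_mult)
    have "\<rho> * \<bar>\<Prod>p\<in>{1..n}-{j}. x - y p\<bar> \<le> \<bar>x - y j\<bar> * \<bar>\<Prod>p\<in>{1..n}-{j}. x - y p\<bar>"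
      using far j by (intro mult_right_mono) auto
    then show ?thesis using e rho by (simp add: field_simps)
  qed
  have "\<bar>(\<Prod>q\<in>{1..n}. x - yh q) - (\<Prod>p\<in>{1..n}. x - y p)\<bar> =
      \<bar>\<Sum>j\<in>{1..n}. (\<Prod>q\<in>{1..n}. y j - yh q) / (\<Prod>p\<in>{1..n}-{j}. y j - y p) * (\<Prod>p\<in>{1..n}-{j}. x - y p)\<bar>"
    by (subst lagrange_id[OF inj n]) (rule refl)
  also have "\<dots> \<le> (\<Sum>j\<in>{1..n}. \<bar>(\<Prod>q\<in>{1..n}. y j - yh q) / (\<Prod>p\<in>{1..n}-{j}. y j - y p) * (\<Prod>p\<in>{1..n}-{j}. x - y p)\<bar>)"
    by (rule sum_abs)
  also have "\<dots> \<le> (\<Sum>j\<in>{1..n}. \<bar>\<Prod>q\<in>{1..n}. y j - yh q\<bar> / \<bar>\<Prod>p\<in>{1..n}-{j}. y j - y p\<bar> * (\<bar>\<Prod>p\<in>{1..n}. x - y p\<bar> / \<rho>))"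
  proof (rule sum_mono)
    fix j assume j: "j \<in> {1..n}"
    show "\<bar>(\<Prod>q\<in>{1..n}. y j - yh q) / (\<Prod>p\<in>{1..n}-{j}. y j - y p) * (\<Prod>p\<in>{1..n}-{j}. x - y p)\<bar>
       \<le> \<bar>\<Prod>q\<in>{1..n}. y j - yh q\<bar> / \<bar>\<Prod>p\<in>{1..n}-{j}. y j - y p\<bar> * (\<bar>\<Prod>p\<in>{1..n}. x - y p\<bar> / \<rho>)"
      unfolding abs_mult abs_divide by (intro mult_left_mono part[OF j]) auto
  qed
  also have "\<dots> = (\<Sum>j\<in>{1..n}. \<bar>\<Prod>q\<in>{1..n}. y j - yh q\<bar> / \<bar>\<Prod>p\<in>{1..n}-{j}. y j - y p\<bar>) / \<rho> * \<bar>\<Prod>p\<in>{1..n}. x - y p\<bar>"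
    by (simp add: sum_distrib_right sum_divide_distrib)
  finally show ?thesis .
qed

lemma near_some:
  fixes yh y :: "nat \<Rightarrow> real"
  assumes inj: "inj_on y {1..n}" and n: "n \<ge> 1" and q: "q \<in> {1..n}"
  defines "eps \<equiv> (\<Sum>j\<in>{1..n}. \<bar>\<Prod>q\<in>{1..n}. y j - yh q\<bar> / \<bar>\<Prod>p\<in>{1..n}-{j}. y j - y p\<bar>)"
  shows "\<exists>k\<in>{1..n}. \<bar>yh q - y k\<bar> \<le> eps"
proof (rule ccontr)
  assume "\<not> ?thesis"
  then have far: "\<forall>k\<in>{1..n}. \<bar>yh q - y k\<bar> > eps" by auto
  have e0: "eps \<ge> 0" unfolding eps_def by (intro sum_nonneg) auto
  define \<rho> where "\<rho> = Min ((\<lambda>k. \<bar>yh q - y k\<bar>) ` {1..n})"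
  have ne: "(\<lambda>k. \<bar>yh q - y k\<bar>) ` {1..n} \<noteq> {}" using n by auto
  have rin: "\<rho> \<in> (\<lambda>k. \<bar>yh q - y k\<bar>) ` {1..n}" unfolding \<rho>_def by (rule Min_in) (use ne in auto)
  then have rgt: "\<rho> > eps" using far by auto
  have rle: "\<forall>k\<in>{1..n}. \<bar>yh q - y k\<bar> \<ge> \<rho>" unfolding \<rho>_def by auto
  have rpos: "\<rho> > 0" using rgt e0 by simp
  have f0: "(\<Prod>q'\<in>{1..n}. yh q - yh q') = 0" using q by (intro prod_zero) force+
  have g0: "(\<Prod>p\<in>{1..n}. yh q - y p) \<noteq> 0"
  proof -
    have "\<forall>p\<in>{1..n}. yh q - y p \<noteq> 0" using far e0 by force
    then show ?thesis by (subst prod_zero_iff) auto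
  qed
  have "\<bar>(\<Prod>q'\<in>{1..n}. yh q - yh q') - (\<Prod>p\<in>{1..n}. yh q - y p)\<bar> \<le> eps / \<rho> * \<bar>\<Prod>p\<in>{1..n}. yh q - y p\<bar>"
    unfolding eps_def by (rule lag_bound[OF inj n rpos rle])
  then have "\<bar>\<Prod>p\<in>{1..n}. yh q - y p\<bar> \<le> eps / \<rho> * \<bar>\<Prod>p\<in>{1..n}. yh q - y p\<bar>"
    unfolding f0 by simp
  moreover have "eps / \<rho> < 1" using rgt rpos by simp
  moreover have "\<bar>\<Prod>p\<in>{1..n}. yh q - y p\<bar> > 0" using g0 by simp
  ultimately show False
    by (metis mult_less_cancel_right2 not_less)
qed

lemma root_in_interval:
  fixes yh y :: "nat \<Rightarrow> real"
  assumes inj: "inj_on y {1..n}" and n: "n \<ge> 1" and k: "k \<in> {1..n}"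
    and sep: "\<forall>p\<in>{1..n}. \<forall>q\<in>{1..n}. p \<noteq> q \<longrightarrow> \<bar>y p - y q\<bar> \<ge> d" and d: "d > 0"
    and small: "(\<Sum>j\<in>{1..n}. \<bar>\<Prod>q\<in>{1..n}. y j - yh q\<bar> / \<bar>\<Prod>p\<in>{1..n}-{j}. y j - y p\<bar>) < d / 2"
  shows "\<exists>q\<in>{1..n}. yh q \<in> {y k - d/2 <..< y k + d/2}"
proof -
  define eps where "eps = (\<Sum>j\<in>{1..n}. \<bar>\<Prod>q\<in>{1..n}. y j - yh q\<bar> / \<bar>\<Prod>p\<in>{1..n}-{j}. y j - y p\<bar>)"
  define f where "f x = (\<Prod>q\<in>{1..n}. x - yh q)" for x
  define g where "g x = (\<Prod>p\<in>{1..n}. x - y p)" for x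
  define a where "a = y k - d/2"
  define b where "b = y k + d/2"
  have farx: "\<forall>p\<in>{1..n}. \<bar>x - y p\<bar> \<ge> d/2" if x: "\<bar>x - y k\<bar> = d/2" for x
  proof
    fix p assume p: "p \<in> {1..n}"
    show "\<bar>x - y p\<bar> \<ge> d/2"
    proof (cases "p = k")
      case True then show ?thesis using x by simp
    next
      case False
      then have "\<bar>y p - y k\<bar> \<ge> d" using sep p k by blast
      then show ?thesis using x by linarith
    qed
  qed
  have gnz: "g x \<noteq> 0" if x: "\<bar>x - y k\<bar> = d/2" for x
  proof -
    have "\<forall>p\<in>{1..n}. x - y p \<noteq> 0" using farx[OF x] d by force
    then show ?thesis unfolding g_def by (subst prod_zero_iff) auto
  qed
  have fg: "f x * g x > 0" if x: "\<bar>x - y k\<bar> = d/2" for x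
  proof -
    have d2: "d/2 > 0" using d by simp
    have "\<bar>f x - g x\<bar> \<le> eps / (d/2) * \<bar>g x\<bar>"
      unfolding f_def g_def eps_def by (rule lag_bound[OF inj n d2 farx[OF x]])
    also have "\<dots> < 1 * \<bar>g x\<bar>"
      using gnz[OF x] small d unfolding eps_def by (intro mult_strict_right_mono) auto
    finally have lt: "\<bar>f x - g x\<bar> < \<bar>g x\<bar>" by simp
    have "f x * g x = (g x)^2 + (f x - g x) * g x" by (simp add: power2_eq_square algebra_simps)
    moreover have "\<bar>(f x - g x) * g x\<bar> < (g x)^2"
    proof -
      have "\<bar>f x - g x\<bar> * \<bar>g x\<bar> < \<bar>g x\<bar> * \<bar>g x\<bar>"
        using lt gnz[OF x] by (intro mult_strict_right_mono) auto
      then show ?thesis by (simp add: abs_mult power2_eq_square)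
    qed
    ultimately show ?thesis by linarith
  qed
  have ga: "\<bar>a - y k\<bar> = d/2" and gb: "\<bar>b - y k\<bar> = d/2" using d by (auto simp: a_def b_def)
  have gab: "g a * g b < 0"
  proof -
    have "g a * g b = (\<Prod>p\<in>{1..n}. (a - y p) * (b - y p))"
      unfolding g_def by (simp add: prod.distrib)
    also have "\<dots> = ((a - y k) * (b - y k)) * (\<Prod>p\<in>{1..n}-{k}. (a - y p) * (b - y p))"
      by (rule prod.remove[OF finite_atLeastAtMost k])
    also have "\<dots> < 0"
    proof (rule mult_neg_pos)
      show "(a - y k) * (b - y k) < 0" using d by (simp add: a_def b_def mult_neg_pos)
      show "0 < (\<Prod>p\<in>{1..n}-{k}. (a - y p) * (b - y p))"
      proof (rule prod_pos)
        fix p assume p: "p \<in> {1..n}-{k}"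
        then have "\<bar>y p - y k\<bar> \<ge> d" using sep k by blast
        then have "y p \<ge> y k + d \<or> y p \<le> y k - d" by linarith
        then show "0 < (a - y p) * (b - y p)"
          using d by (auto simp: a_def b_def mult_neg_neg mult_pos_pos)
      qed
    qed
    finally show ?thesis .
  qed
  have fab: "f a * f b < 0"
  proof -
    have "(f a * g a) * (f b * g b) > 0" using fg[OF ga] fg[OF gb] by simp
    then have "(f a * f b) * (g a * g b) > 0" by (simp add: algebra_simps)
    then show ?thesis using gab
      by (smt (verit) mult_neg_neg mult_nonneg_nonneg mult_nonpos_nonneg mult_nonneg_nonpos)
  qed
  have ab: "a \<le> b" using d by (simp add: a_def b_def)
  have cont: "continuous_on {a..b} f" unfolding f_def by (intro continuous_intros)
  obtain x where x: "a \<le> x" "x \<le> b" "f x = 0"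
  proof (cases "f a < 0")
    case True
    then have "f b > 0" using fab by (simp add: mult_less_0_iff)
    then show ?thesis using IVT'[of f a 0 b] True ab cont that by force
  next
    case False
    then have "f a > 0" using fab by (cases "f a = 0") auto
    then have "f b < 0" using fab by (simp add: mult_less_0_iff)
    then show ?thesis using IVT2'[of f b 0 a] \<open>f a > 0\<close> ab cont that by force
  qed
  have "x \<noteq> a" "x \<noteq> b" using x fab by auto
  then have xin: "x \<in> {a<..<b}" using x by auto
  obtain q where q: "q \<in> {1..n}" "x - yh q = 0"
    using x(3) unfolding f_def by (subst (asm) prod_zero_iff) auto
  then show ?thesis using xin by (auto simp: a_def b_def)
qed



lemma E_bound:
  fixes m :: nat
  shows "(2 * real m + 3) ^ (2*m+1) \<le> exp 2 * (2 * real m + 1) ^ (2*m+1)"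
proof -
  define a where "a = 2 * real m + 1"
  have a: "a > 0" by (simp add: a_def)
  have "1 + 2 / a \<le> exp (2 / a)" by (rule exp_ge_add_one_self)
  then have "(1 + 2 / a) ^ (2*m+1) \<le> exp (2 / a) ^ (2*m+1)"
    by (intro power_mono) (use a in auto)
  also have "exp (2 / a) ^ (2*m+1) = exp (real (2*m+1) * (2 / a))"
    by (simp only: exp_of_nat_mult)
  also have "real (2*m+1) * (2 / a) = 2" using a by (simp add: a_def field_simps)
  finally have "(1 + 2 / a) ^ (2*m+1) \<le> exp 2" .
  moreover have "(1 + 2 / a) ^ (2*m+1) = (a + 2) ^ (2*m+1) / a ^ (2*m+1)"
    using a by (simp add: power_divide field_simps)
  ultimately have "(a + 2) ^ (2*m+1) \<le> exp 2 * a ^ (2*m+1)"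
    using a by (simp add: field_simps)
  moreover have "a + 2 = 2 * real m + 3" by (simp add: a_def)
  ultimately show ?thesis unfolding a_def by metis
qed

lemma num_fact:
  fixes m :: nat
  assumes "m \<ge> 1"
  shows "2 * pi * sqrt pi * (2 * real m + 1) ^ (2*m+1) * fact (2*m)
          \<le> 4 * (real m + 1) * 16 ^ m * exp (2 * real m + 2) * (fact m)^4"
  using assms
proof (induction m rule: nat_induct_at_least)
  case base
  have pi4: "pi \<le> 4" using pi_less_4 by simp
  have sq: "sqrt pi \<le> 2"
    using pi4 real_sqrt_le_mono[of pi 4] by simp
  have e: "exp (4::real) \<ge> 16"
  proof -
    have "exp (1::real) \<ge> 2" using exp_ge_add_one_self[of 1] by simp
    then have "exp (1::real) ^ 4 \<ge> 2 ^ 4" by (intro power_mono) auto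
    then show ?thesis by (simp add: exp_of_nat_mult[symmetric])
  qed
  have "2 * pi * sqrt pi * 27 * 2 \<le> 2 * 4 * 2 * 27 * (2::real)"
    using pi4 sq pi_gt_zero by (intro mult_right_mono mult_mono) auto
  also have "\<dots> \<le> 4 * 2 * 16 * 16" by simp
  also have "\<dots> \<le> 4 * 2 * 16 * exp 4" using e by simp
  finally show ?case by (simp add: numeral_eq_Suc)
next
  case (Suc m)
  define a where "a = 2 * real m + 1"
  define L where "L = 2 * pi * sqrt pi * (2 * real m + 1) ^ (2*m+1) * fact (2*m)"
  define R where "R = 4 * (real m + 1) * 16 ^ m * exp (2 * real m + 2) * (fact m)^4"
  have LR: "L \<le> R" using Suc.IH by (simp add: L_def R_def)
  have L0: "L \<ge> 0" by (simp add: L_def)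
  have eq1: "(2 * real (Suc m) + 1) ^ (2 * Suc m + 1) = (2 * real m + 3)^2 * (2 * real m + 3) ^ (2*m+1)"
    by (simp add: power_add[symmetric] algebra_simps)
  have eq2: "fact (2 * Suc m) = (2 * real m + 2) * (2 * real m + 1) * (fact (2*m) :: real)"
    by (simp add: algebra_simps)
  have "2 * pi * sqrt pi * (2 * real (Suc m) + 1) ^ (2 * Suc m + 1) * fact (2 * Suc m)
      = (2 * real m + 3)^2 * (2 * real m + 2) * (2 * real m + 1) * (2 * pi * sqrt pi * (2 * real m + 3) ^ (2*m+1) * fact (2*m))"
    unfolding eq1 eq2 by (simp add: algebra_simps)
  also have "\<dots> \<le> (2 * real m + 3)^2 * (2 * real m + 2) * (2 * real m + 1) * (exp 2 * L)"
  proof (rule mult_left_mono)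
    have "2 * pi * sqrt pi * (2 * real m + 3) ^ (2*m+1) * fact (2*m)
        \<le> 2 * pi * sqrt pi * (exp 2 * (2 * real m + 1) ^ (2*m+1)) * fact (2*m)"
      using E_bound[of m] by (intro mult_right_mono mult_left_mono) auto
    then show "2 * pi * sqrt pi * (2 * real m + 3) ^ (2*m+1) * fact (2*m) \<le> exp 2 * L"
      by (simp add: L_def algebra_simps)
  qed simp
  also have "\<dots> \<le> (2 * real m + 3)^2 * (2 * real m + 2) * (2 * real m + 1) * (exp 2 * R)"
    using LR by (intro mult_left_mono) auto
  also have "\<dots> \<le> 16 * (real m + 2) * (real m + 1)^3 * (exp 2 * R)"
  proof (rule mult_right_mono)
    have "(2 * real m + 3)^2 * (2 * real m + 2) * (2 * real m + 1)
        = 16 * real m ^ 4 + 72 * real m ^ 3 + 116 * real m^2 + 78 * real m + 18"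
      by (simp add: power2_eq_square power3_eq_cube power4_eq_xxxx algebra_simps)
    moreover have "16 * (real m + 2) * (real m + 1)^3
        = 16 * real m ^ 4 + 80 * real m ^ 3 + 144 * real m^2 + 112 * real m + 32"
      by (simp add: power2_eq_square power3_eq_cube power4_eq_xxxx algebra_simps)
    moreover have "0 \<le> real m ^ 3" "0 \<le> real m ^ 2" "0 \<le> real m" by auto
    ultimately show "(2 * real m + 3)^2 * (2 * real m + 2) * (2 * real m + 1) \<le> 16 * (real m + 2) * (real m + 1)^3"
      by linarith
  qed (simp add: R_def)
  also have "\<dots> = 4 * (real (Suc m) + 1) * 16 ^ Suc m * exp (2 * real (Suc m) + 2) * (fact (Suc m))^4"
  proof -
    have "exp (2 * real (Suc m) + 2) = exp 2 * exp (2 * real m + 2)"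
      by (simp add: exp_add[symmetric] algebra_simps)
    moreover have "(fact (Suc m) :: real)^4 = (real m + 1)^4 * (fact m)^4"
    proof -
      have "(fact (Suc m) :: real) = (real m + 1) * fact m" by simp
      then show ?thesis by (simp only: power_mult_distrib)
    qed
    ultimately show ?thesis unfolding R_def
      by (simp add: power2_eq_square power3_eq_cube power4_eq_xxxx algebra_simps)
  qed
  finally show ?case .
qed

lemma num_B:
  assumes n: "n \<ge> 2"
  shows "4 ^ n * (pi * (2 * real n - 1) / 2) ^ (2*n-1) * real ((2*(n-1)) choose (n-1)) / (fact (n-1))^2
           \<le> C_const n * pi ^ (2*n-2)"
proof -
  define m where "m = n - 1"
  have m: "m \<ge> 1" "n = m + 1" using n by (auto simp: m_def)
  define X where "X = (2 * real m + 1) ^ (2*m+1)"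
  define F where "F = (fact (2*m) :: real)"
  define fm where "fm = (fact m :: real)"
  have fm0: "fm > 0" by (simp add: fm_def)
  have sp: "sqrt pi > 0" by simp
  have key: "(2 * pi * sqrt pi * X * F) * (pi ^ (2*m) / (sqrt pi * fm^4))
      \<le> (4 * (real m + 1) * 16 ^ m * exp (2 * real m + 2) * fm^4) * (pi ^ (2*m) / (sqrt pi * fm^4))"
    using num_fact[OF m(1)] fm0 sp by (intro mult_right_mono) (auto simp: X_def F_def fm_def)
  have binom: "real ((2*m) choose m) = F / fm^2"
    using binomial_fact[of m "2*m"] by (simp add: F_def fm_def power2_eq_square mult_2)
  have lhs: "4 ^ n * (pi * (2 * real n - 1) / 2) ^ (2*n-1) * real ((2*(n-1)) choose (n-1)) / (fact (n-1))^2
      = (2 * pi * sqrt pi * X * F) * (pi ^ (2*m) / (sqrt pi * fm^4))"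
  proof -
    have a: "2 * real n - 1 = 2 * real m + 1" using m by simp
    have b: "2*n-1 = 2*m+1" "2*(n-1) = 2*m" "n - 1 = m" using m by auto
    have c: "(pi * (2 * real m + 1) / 2) ^ (2*m+1) = pi ^ (2*m+1) * X / 2 ^ (2*m+1)"
      by (simp add: X_def power_divide power_mult_distrib)
    have d0: "(2::real) ^ (2*m) = 4 ^ m" by (simp add: power_mult)
    have d: "(4::real) ^ n = 2 * 2 ^ (2*m+1)" using m d0 by simp
    show ?thesis unfolding a b c d binom using fm0 sp
      by (simp add: fm_def[symmetric] field_simps power_add power_mult_distrib)
  qed
  have rhs: "C_const n * pi ^ (2*n-2) = (4 * (real m + 1) * 16 ^ m * exp (2 * real m + 2) * fm^4) * (pi ^ (2*m) / (sqrt pi * fm^4))"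
  proof -
    have b: "2*n-2 = 2*m" "4*n-2 = 4*m+2" using m by auto
    have e: "exp (2 * real n) = exp (2 * real m + 2)" using m by simp
    have f: "(2::real) ^ (4*m+2) = 4 * 16 ^ m" by (simp add: power_add power_mult)
    show ?thesis unfolding C_const_def b e f using fm0 sp m(2)
      by (simp add: field_simps)
  qed
  show ?thesis unfolding lhs rhs by (rule key)
qed

lemma suc_le_pow2: "real m + 1 \<le> 2 ^ m"
proof (induction m)
  case 0 then show ?case by simp
next
  case (Suc m)
  have "1 \<le> (2::real) ^ m" by simp
  then show ?case using Suc by simp
qed

lemma num_A:
  assumes n: "n \<ge> 2"
  shows "C_const n * pi ^ (2*n-2) / (5.88 * pi * exp 1) ^ (2*n-1) < 1/2"
proof -
  define m where "m = n - 1"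
  have m: "m \<ge> 1" "n = m + 1" using n by (auto simp: m_def)
  have pi3: "pi > 3" using pi_gt3 .
  have sp: "sqrt pi > 1.7"
  proof -
    have "sqrt (2.89::real) = 1.7" by (rule real_sqrt_unique) (simp_all add: power2_eq_square)
    moreover have "sqrt (2.89::real) < sqrt pi" using pi3 by (intro real_sqrt_less_mono) simp
    ultimately show ?thesis by linarith
  qed
  have e3: "exp (1::real) \<le> 3" by (rule exp_le)
  have e0: "exp (1::real) > 0" by simp
  have eq: "C_const n * pi ^ (2*n-2) / (5.88 * pi * exp 1) ^ (2*n-1)
      = (real m + 1) * (16 / 34.5744) ^ m * (4 * exp 1 / (5.88 * pi * sqrt pi))"
  proof -
    have b: "2*n-2 = 2*m" "4*n-2 = 4*m+2" "2*n-1 = 2*m+1" using m by auto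
    have e: "exp (2 * real n) = exp 1 ^ (2*m+2)"
    proof -
      have "exp (2 * real n) = exp (real (2*m+2) * 1)" using m(2) by simp
      also have "\<dots> = exp 1 ^ (2*m+2)" by (rule exp_of_nat_mult)
      finally show ?thesis .
    qed
    have f: "(2::real) ^ (4*m+2) = 4 * 16 ^ m" by (simp add: power_add power_mult)
    have g: "(5.88 * pi * exp 1) ^ (2*m+1) = 5.88 * 34.5744 ^ m * pi ^ (2*m+1) * exp 1 ^ (2*m+1)"
    proof -
      have "(5.88 * pi * exp 1) ^ (2*m+1) = (5.88 * pi * exp 1) * ((5.88 * pi * exp 1)^2) ^ m"
        by (simp add: power_add power_mult)
      also have "((5.88 * pi * exp 1)^2) ^ m = 34.5744 ^ m * (pi^2)^m * ((exp 1)^2)^m"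
      proof -
        have "(5.88 * pi * exp 1)^2 = 34.5744 * pi^2 * (exp 1)^2" by (simp add: power2_eq_square)
        then show ?thesis by (simp only: power_mult_distrib)
      qed
      finally show ?thesis by (simp add: power_add power_mult)
    qed
    have h: "(16 / 34.5744 :: real) ^ m = 16 ^ m / 34.5744 ^ m" by (rule power_divide)
    have k: "(10000::real)^m = 16^m * 625^m"
    proof -
      have "(16::real)^m * 625^m = (16*625)^m" by (rule power_mult_distrib[symmetric])
      then show ?thesis by simp
    qed
    show ?thesis unfolding C_const_def b e f g h using m(2) e0 pi_gt_zero
      by (simp add: field_simps power_add k)
  qed
  have p1: "(real m + 1) * (16 / 34.5744) ^ m \<le> 1"
  proof -
    have "(16 / 34.5744 :: real) ^ m \<le> (1/2) ^ m" by (intro power_mono) auto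
    then have "(real m + 1) * (16 / 34.5744) ^ m \<le> 2 ^ m * (1/2) ^ m"
      using suc_le_pow2[of m] by (intro mult_mono) auto
    also have "\<dots> = 1" by (simp add: power_mult_distrib[symmetric])
    finally show ?thesis .
  qed
  have p2: "4 * exp 1 / (5.88 * pi * sqrt pi) < 1/2"
  proof -
    have "3 * 1.7 < pi * sqrt pi" using mult_strict_mono[of 3 pi "1.7" "sqrt pi"] pi3 sp by auto
    then have "5.88 * 3 * 1.7 < 5.88 * pi * sqrt pi" by simp
    then have "8 * exp 1 < 5.88 * pi * sqrt pi" using e3 by simp
    then show ?thesis using pi_gt_zero by (simp add: field_simps)
  qed
  have p3: "4 * exp 1 / (5.88 * pi * sqrt pi) \<ge> 0" by simp
  have "(real m + 1) * (16 / 34.5744) ^ m * (4 * exp 1 / (5.88 * pi * sqrt pi)) \<le> 1 * (4 * exp 1 / (5.88 * pi * sqrt pi))"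
    using p1 p3 by (intro mult_right_mono) auto
  then show ?thesis unfolding eq using p2 by linarith
qed



lemma FT_sample:
  "FT c x n (- \<Omega> + real r * H) =
     (\<Sum>l\<in>{1..n}. (c l * exp (\<i> * of_real (- \<Omega> * x l))) * exp (\<i> * of_real (H * x l)) ^ r)"
  unfolding FT_def
proof (rule sum.cong[OF refl])
  fix l
  have "\<i> * complex_of_real (x l * (- \<Omega> + real r * H)) = \<i> * of_real (- \<Omega> * x l) + of_nat r * (\<i> * of_real (H * x l))"
    by (simp add: algebra_simps)
  then have "exp (\<i> * complex_of_real (x l * (- \<Omega> + real r * H))) = exp (\<i> * of_real (- \<Omega> * x l) + of_nat r * (\<i> * of_real (H * x l)))"
    by (simp only:)
  also have "\<dots> = exp (\<i> * of_real (- \<Omega> * x l)) * exp (\<i> * of_real (H * x l)) ^ r"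
    by (simp only: exp_add exp_of_nat_mult)
  finally have "exp (\<i> * complex_of_real (x l * (- \<Omega> + real r * H))) = exp (\<i> * of_real (- \<Omega> * x l)) * exp (\<i> * of_real (H * x l)) ^ r" .
  then show "c l * exp (\<i> * complex_of_real (x l * (- \<Omega> + real r * H))) =
       c l * exp (\<i> * of_real (- \<Omega> * x l)) * exp (\<i> * of_real (H * x l)) ^ r"
    by simp
qed

lemma norm_exp_i [simp]: "cmod (exp (\<i> * complex_of_real t)) = 1"
  by simp

lemma key_ineq:
  fixes a ah :: "nat \<Rightarrow> complex" and y yh :: "nat \<Rightarrow> real" and H \<Omega> B :: real and n s M :: nat
  assumes n: "n \<ge> 2"
    and Hpi: "\<forall>j\<in>{1..n}. \<forall>q\<in>{1..n}. \<bar>H * y j - H * yh q\<bar> \<le> pi \<and> \<bar>H * y j - H * y q\<bar> \<le> pi"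
    and Hpos: "H > 0"
    and B: "\<forall>r\<le>2*n-1. cmod (FT ah yh n (- \<Omega> + real r * H) - FT a y n (- \<Omega> + real r * H)) \<le> B"
    and j: "j \<in> {1..n}"
  shows "cmod (a j) * ((2*H/pi)^(2*n-1) * (\<bar>\<Prod>q\<in>{1..n}. y j - yh q\<bar> * \<bar>\<Prod>p\<in>{1..n}-{j}. y j - y p\<bar>)) \<le> 2^(2*n-1) * B"
proof -
  define z where "z l = exp (\<i> * of_real (H * y l))" for l
  define zh where "zh l = exp (\<i> * of_real (H * yh l))" for l
  define a' where "a' l = a l * exp (\<i> * of_real (- \<Omega> * y l))" for l
  define ah' where "ah' l = ah l * exp (\<i> * of_real (- \<Omega> * yh l))" for l
  define U where "U r = (\<Sum>l\<in>{1..n}. ah' l * zh l ^ r)" for r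
  define V where "V r = (\<Sum>l\<in>{1..n}. a' l * z l ^ r)" for r
  define ws where "ws = map zh [1..<n+1] @ map z (filter (\<lambda>p. p \<noteq> j) [1..<n+1])"
  have len: "length ws = 2*n-1"
  proof -
    have "length (filter (\<lambda>p. p \<noteq> j) [1..<n+1]) = n - 1"
    proof -
      have "length (filter (\<lambda>p. p \<noteq> j) [1..<n+1]) = card (set (filter (\<lambda>p. p \<noteq> j) [1..<n+1]))"
        by (rule distinct_card[symmetric]) simp
      also have "set (filter (\<lambda>p. p \<noteq> j) [1..<n+1]) = {1..n} - {j}" by auto
      finally show ?thesis using j by simp
    qed
    then show ?thesis using n by (simp add: ws_def)
  qed
  have setws: "set ws = zh ` {1..n} \<union> z ` ({1..n} - {j})"
    by (auto simp: ws_def)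
  have uB: "\<forall>r\<le>0 + length ws. cmod (U r - V r) \<le> B"
  proof (intro allI impI)
    fix r assume r: "r \<le> 0 + length ws"
    have "U r = FT ah yh n (- \<Omega> + real r * H)" by (simp only: U_def FT_sample ah'_def zh_def)
    moreover have "V r = FT a y n (- \<Omega> + real r * H)" by (simp only: V_def FT_sample a'_def z_def)
    ultimately show "cmod (U r - V r) \<le> B" using B r len by simp
  qed
  have nw: "\<forall>w\<in>set ws. cmod w \<le> 1" unfolding setws z_def zh_def by auto
  have D: "cmod (Dop ws (\<lambda>r. U r - V r) 0) \<le> 2 ^ length ws * B"
    by (rule Dop_bound[OF nw uB]) simp
  have DU: "Dop ws U 0 = 0"
  proof -
    have "Dop ws U 0 = (\<Sum>l\<in>{1..n}. ah' l * (\<Prod>w\<leftarrow>ws. zh l - w) * zh l ^ 0)"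
      unfolding U_def Dop_sum by simp
    also have "\<dots> = 0"
    proof (rule sum.neutral, intro ballI)
      fix l assume l: "l \<in> {1..n}"
      have "zh l \<in> set ws" using l setws by auto
      then have "(\<Prod>w\<leftarrow>ws. zh l - w) = 0" by (auto simp: prod_list_zero_iff)
      then show "ah' l * (\<Prod>w\<leftarrow>ws. zh l - w) * zh l ^ 0 = 0" by simp
    qed
    finally show ?thesis .
  qed
  have DV: "Dop ws V 0 = a' j * (\<Prod>w\<leftarrow>ws. z j - w)"
  proof -
    have "Dop ws V 0 = (\<Sum>l\<in>{1..n}. a' l * (\<Prod>w\<leftarrow>ws. z l - w) * z l ^ 0)"
      unfolding V_def Dop_sum by simp
    also have "\<dots> = a' j * (\<Prod>w\<leftarrow>ws. z j - w) * z j ^ 0 + (\<Sum>l\<in>{1..n}-{j}. a' l * (\<Prod>w\<leftarrow>ws. z l - w) * z l ^ 0)"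
      by (rule sum.remove[OF finite_atLeastAtMost j])
    also have "(\<Sum>l\<in>{1..n}-{j}. a' l * (\<Prod>w\<leftarrow>ws. z l - w) * z l ^ 0) = 0"
    proof (rule sum.neutral, intro ballI)
      fix l assume l: "l \<in> {1..n}-{j}"
      have "z l \<in> set ws" using l setws by auto
      then have "(\<Prod>w\<leftarrow>ws. z l - w) = 0" by (auto simp: prod_list_zero_iff)
      then show "a' l * (\<Prod>w\<leftarrow>ws. z l - w) * z l ^ 0 = 0" by simp
    qed
    finally show ?thesis by simp
  qed
  have prodws: "(\<Prod>w\<leftarrow>ws. z j - w) = (\<Prod>q\<in>{1..n}. z j - zh q) * (\<Prod>p\<in>{1..n}-{j}. z j - z p)"
  proof -
    have "(\<Prod>w\<leftarrow>ws. z j - w) = (\<Prod>q\<leftarrow>[1..<n+1]. z j - zh q) * (\<Prod>p\<leftarrow>filter (\<lambda>p. p \<noteq> j) [1..<n+1]. z j - z p)"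
      by (simp add: ws_def o_def)
    also have "(\<Prod>q\<leftarrow>[1..<n+1]. z j - zh q) = (\<Prod>q\<in>set [1..<n+1]. z j - zh q)"
      by (rule prod.distinct_set_conv_list[symmetric]) simp
    also have "(\<Prod>p\<leftarrow>filter (\<lambda>p. p \<noteq> j) [1..<n+1]. z j - z p) = (\<Prod>p\<in>set (filter (\<lambda>p. p \<noteq> j) [1..<n+1]). z j - z p)"
      by (rule prod.distinct_set_conv_list[symmetric]) simp
    also have "set [1..<n+1] = {1..n}" by auto
    also have "set (filter (\<lambda>p. p \<noteq> j) [1..<n+1]) = {1..n} - {j}" by auto
    finally show ?thesis .
  qed
  have main: "cmod (a j) * (cmod (\<Prod>q\<in>{1..n}. z j - zh q) * cmod (\<Prod>p\<in>{1..n}-{j}. z j - z p)) \<le> 2^(2*n-1) * B"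
  proof -
    have "Dop ws (\<lambda>r. U r - V r) 0 = - (a' j * (\<Prod>w\<leftarrow>ws. z j - w))"
      unfolding Dop_diff DU DV by simp
    then have "cmod (a' j * (\<Prod>w\<leftarrow>ws. z j - w)) \<le> 2 ^ (2*n-1) * B" using D len by simp
    then show ?thesis unfolding prodws by (simp add: a'_def norm_mult)
  qed
  have c1: "(2*H/pi)^n * \<bar>\<Prod>q\<in>{1..n}. y j - yh q\<bar> \<le> cmod (\<Prod>q\<in>{1..n}. z j - zh q)"
  proof -
    have "(\<Prod>q\<in>{1..n}. 2/pi * \<bar>H * y j - H * yh q\<bar>) = (\<Prod>q\<in>{1..n}. (2*H/pi) * \<bar>y j - yh q\<bar>)"
      using Hpos by (intro prod.cong) (auto simp: right_diff_distrib[symmetric] abs_mult)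
    also have "\<dots> = (2*H/pi)^n * \<bar>\<Prod>q\<in>{1..n}. y j - yh q\<bar>"
      by (simp only: prod.distrib prod_constant abs_prod) simp
    finally have "(2*H/pi)^n * \<bar>\<Prod>q\<in>{1..n}. y j - yh q\<bar> = (\<Prod>q\<in>{1..n}. 2/pi * \<bar>H * y j - H * yh q\<bar>)" by simp
    also have "\<dots> \<le> (\<Prod>q\<in>{1..n}. cmod (z j - zh q))"
    proof (rule prod_mono)
      fix q assume q: "q \<in> {1..n}"
      show "0 \<le> 2/pi * \<bar>H * y j - H * yh q\<bar> \<and> 2/pi * \<bar>H * y j - H * yh q\<bar> \<le> cmod (z j - zh q)"
        using chord_bound[of "H * y j" "H * yh q"] Hpi j q by (auto simp: z_def zh_def)
    qed
    also have "\<dots> = cmod (\<Prod>q\<in>{1..n}. z j - zh q)" by (rule prod_norm)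
    finally show ?thesis .
  qed
  have c2: "(2*H/pi)^(n-1) * \<bar>\<Prod>p\<in>{1..n}-{j}. y j - y p\<bar> \<le> cmod (\<Prod>p\<in>{1..n}-{j}. z j - z p)"
  proof -
    have "(\<Prod>p\<in>{1..n}-{j}. 2/pi * \<bar>H * y j - H * y p\<bar>) = (\<Prod>p\<in>{1..n}-{j}. (2*H/pi) * \<bar>y j - y p\<bar>)"
      using Hpos by (intro prod.cong) (auto simp: right_diff_distrib[symmetric] abs_mult)
    also have "\<dots> = (2*H/pi)^(n-1) * \<bar>\<Prod>p\<in>{1..n}-{j}. y j - y p\<bar>"
      using j by (simp only: prod.distrib prod_constant abs_prod) simp
    finally have "(2*H/pi)^(n-1) * \<bar>\<Prod>p\<in>{1..n}-{j}. y j - y p\<bar> = (\<Prod>p\<in>{1..n}-{j}. 2/pi * \<bar>H * y j - H * y p\<bar>)" by simp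
    also have "\<dots> \<le> (\<Prod>p\<in>{1..n}-{j}. cmod (z j - z p))"
    proof (rule prod_mono)
      fix p assume p: "p \<in> {1..n}-{j}"
      show "0 \<le> 2/pi * \<bar>H * y j - H * y p\<bar> \<and> 2/pi * \<bar>H * y j - H * y p\<bar> \<le> cmod (z j - z p)"
        using chord_bound[of "H * y j" "H * y p"] Hpi j p by (auto simp: z_def)
    qed
    also have "\<dots> = cmod (\<Prod>p\<in>{1..n}-{j}. z j - z p)" by (rule prod_norm)
    finally show ?thesis .
  qed
  have "(2*H/pi)^(2*n-1) * (\<bar>\<Prod>q\<in>{1..n}. y j - yh q\<bar> * \<bar>\<Prod>p\<in>{1..n}-{j}. y j - y p\<bar>)
      = ((2*H/pi)^n * \<bar>\<Prod>q\<in>{1..n}. y j - yh q\<bar>) * ((2*H/pi)^(n-1) * \<bar>\<Prod>p\<in>{1..n}-{j}. y j - y p\<bar>)"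
  proof -
    have "2*n-1 = n + (n-1)" using n by simp
    then show ?thesis by (simp add: power_add algebra_simps)
  qed
  also have "\<dots> \<le> cmod (\<Prod>q\<in>{1..n}. z j - zh q) * cmod (\<Prod>p\<in>{1..n}-{j}. z j - z p)"
    using c1 c2 Hpos by (intro mult_mono) auto
  finally have "cmod (a j) * ((2*H/pi)^(2*n-1) * (\<bar>\<Prod>q\<in>{1..n}. y j - yh q\<bar> * \<bar>\<Prod>p\<in>{1..n}-{j}. y j - y p\<bar>))
      \<le> cmod (a j) * (cmod (\<Prod>q\<in>{1..n}. z j - zh q) * cmod (\<Prod>p\<in>{1..n}-{j}. z j - z p))"
    by (intro mult_left_mono) auto
  then show ?thesis using main by linarith
qed

lemma eps_bound:
  fixes y yh :: "nat \<Rightarrow> real"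
  assumes n: "n \<ge> 1"
    and sep: "\<forall>p\<in>{1..n}. \<forall>q\<in>{1..n}. p \<noteq> q \<longrightarrow> \<bar>y p - y q\<bar> \<ge> d" and d: "d > 0"
    and hK: "\<forall>j\<in>{1..n}. \<bar>\<Prod>q\<in>{1..n}. y j - yh q\<bar> * \<bar>\<Prod>p\<in>{1..n}-{j}. y j - y p\<bar> \<le> K"
  shows "(\<Sum>j\<in>{1..n}. \<bar>\<Prod>q\<in>{1..n}. y j - yh q\<bar> / \<bar>\<Prod>p\<in>{1..n}-{j}. y j - y p\<bar>)
          \<le> K * real ((2*(n-1)) choose (n-1)) / ((fact (n-1))^2 * d^(2*(n-1)))"
proof -
  define A where "A j = card {p\<in>{1..n}. y j < y p}" for j
  have tm: "\<bar>\<Prod>q\<in>{1..n}. y j - yh q\<bar> / \<bar>\<Prod>p\<in>{1..n}-{j}. y j - y p\<bar>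
      \<le> K / d^(2*(n-1)) * (1 / (fact (A j) * fact (n - 1 - A j))^2)" if j: "j \<in> {1..n}" for j
  proof -
    define G where "G = \<bar>\<Prod>p\<in>{1..n}-{j}. y j - y p\<bar>"
    define Fj where "Fj = \<bar>\<Prod>q\<in>{1..n}. y j - yh q\<bar>"
    define low where "low = d ^ (n - 1) * (fact (A j) * fact (n - 1 - A j))"
    have cs: "card {p\<in>{1..n}. y p < y j} = n - 1 - A j"
      using card_split(2)[OF sep d j] unfolding A_def by linarith
    have lowG: "low \<le> G" using gprime_lower[OF sep d j] cs unfolding low_def G_def A_def by simp
    have low0: "low > 0" using d unfolding low_def by simp
    have G0: "G > 0" using lowG low0 by linarith
    have FK: "Fj * G \<le> K" using hK j unfolding Fj_def G_def by simp
    have K0: "K \<ge> 0" proof -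
      have "0 \<le> Fj * G" by (simp add: Fj_def G_def)
      then show ?thesis using FK by linarith
    qed
    have "Fj / G = (Fj * G) / G^2" using G0 by (simp add: power2_eq_square)
    also have "\<dots> \<le> K / G^2" using FK G0 by (intro divide_right_mono) auto
    also have "\<dots> \<le> K / low^2" proof (rule divide_left_mono)
      show "low^2 \<le> G^2" using lowG low0 by (intro power_mono) auto
      show "0 \<le> K" by (rule K0)
      show "0 < G^2 * low^2" using G0 low0 by simp
    qed
    also have "K / low^2 = K / d^(2*(n-1)) * (1 / (fact (A j) * fact (n - 1 - A j))^2)"
    proof -
      have dd: "(d^(n-1))^2 = d^(2*(n-1))" by (metis power_mult mult.commute)
      have "low^2 = d^(2*(n-1)) * (fact (A j) * fact (n - 1 - A j))^2"
        unfolding low_def power_mult_distrib[of "d^(n-1)"] dd ..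
      then show ?thesis by simp
    qed
    finally show ?thesis unfolding Fj_def G_def .
  qed
  have "(\<Sum>j\<in>{1..n}. \<bar>\<Prod>q\<in>{1..n}. y j - yh q\<bar> / \<bar>\<Prod>p\<in>{1..n}-{j}. y j - y p\<bar>)
      \<le> (\<Sum>j\<in>{1..n}. K / d^(2*(n-1)) * (1 / (fact (A j) * fact (n - 1 - A j))^2))"
    by (rule sum_mono) (rule tm)
  also have "\<dots> = K / d^(2*(n-1)) * (\<Sum>j\<in>{1..n}. 1 / (fact (A j) * fact (n - 1 - A j))^2)"
    by (simp add: sum_distrib_left)
  also have "(\<Sum>j\<in>{1..n}. 1 / (fact (A j) * fact (n - 1 - A j))^2 :: real) = (\<Sum>k<n. 1 / (fact k * fact (n - 1 - k))^2)"
    unfolding A_def by (rule sum.reindex_bij_betw[OF rank_bij[OF sep d]])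
  also have "\<dots> = real ((2*(n-1)) choose (n-1)) / (fact (n-1))^2" by (rule sum_fact_sq[OF n])
  finally have fin: "(\<Sum>j\<in>{1..n}. \<bar>\<Prod>q\<in>{1..n}. y j - yh q\<bar> / \<bar>\<Prod>p\<in>{1..n}-{j}. y j - y p\<bar>)
      \<le> K / d^(2*(n-1)) * (real ((2*(n-1)) choose (n-1)) / (fact (n-1))^2)" .
  have "K / d^(2*(n-1)) * (real ((2*(n-1)) choose (n-1)) / (fact (n-1))^2)
      = K * real ((2*(n-1)) choose (n-1)) / ((fact (n-1))^2 * d^(2*(n-1)))"
    using times_divide_times_eq[of K "d^(2*(n-1))" "real ((2*(n-1)) choose (n-1))" "(fact (n-1))^2"]
    by (simp add: mult.commute)
  then show ?thesis using fin by (simp add: mult.commute)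
qed



theorem theorem2p2:
  fixes n M :: nat and \<Omega> \<sigma> :: real
    and a ah :: "nat \<Rightarrow> complex" and y yh :: "nat \<Rightarrow> real" and Y :: "nat \<Rightarrow> complex"
  assumes "n \<ge> 2" and "M > 2 * n" and "\<Omega> > 0"
    and "\<forall>j\<in>{1..n}. a j \<noteq> 0"
    and "inj_on y {1..n}"
    and "\<forall>j\<in>{1..n}. y j \<in> I_int n \<Omega>"
    and "sup_dist a y n \<Omega> M Y < \<sigma>"
    and "d_min y n \<ge> 5.88 * pi * exp 1 / \<Omega> * (\<sigma> / m_min a n) powr (1 / (2 * real n - 1))"
    and "\<forall>j\<in>{1..n}. yh j \<in> I_int n \<Omega>"
    and "sup_dist ah yh n \<Omega> M Y < \<sigma>"
  shows "within_nbhd y n (d_min y n / 2) yh \<and>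
    (\<exists>\<pi>. bij_betw \<pi> {1..n} {1..n} \<and>
      (\<forall>j\<in>{1..n}. \<bar>yh (\<pi> j) - y j\<bar> \<le>
         C_const n / \<Omega> * (pi / (\<Omega> * d_min y n)) ^ (2 * n - 2) * (\<sigma> / m_min a n)))"
proof -
  note n = assms(1) and M = assms(2) and Om = assms(3) and anz = assms(4) and inj = assms(5)
    and yI = assms(6) and S1s = assms(7) and hyp = assms(8) and yhI = assms(9) and S2s = assms(10)
  define d where "d = d_min y n"
  define mm where "mm = m_min a n"
  define t where "t = \<sigma> / mm"
  define S1 where "S1 = sup_dist a y n \<Omega> M Y"
  define S2 where "S2 = sup_dist ah yh n \<Omega> M Y"
  have n1: "n \<ge> 1" using n by simp
  define DS where "DS = {\<bar>y p - y j\<bar> | p j. p \<in> {1..n} \<and> j \<in> {1..n} \<and> p \<noteq> j}"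
  have DSsub: "DS \<subseteq> (\<lambda>(p, j). \<bar>y p - y j\<bar>) ` ({1..n} \<times> {1..n})"
  proof
    fix x assume "x \<in> DS"
    then obtain p j where "x = \<bar>y p - y j\<bar>" "p \<in> {1..n}" "j \<in> {1..n}" unfolding DS_def by blast
    then show "x \<in> (\<lambda>(p, j). \<bar>y p - y j\<bar>) ` ({1..n} \<times> {1..n})"
      by (intro image_eqI[of _ _ "(p, j)"]) auto
  qed
  have DSfin: "finite DS" by (rule finite_subset[OF DSsub]) auto
  have DSne: "DS \<noteq> {}"
  proof -
    have "(1::nat) \<in> {1..n}" "(2::nat) \<in> {1..n}" "(1::nat) \<noteq> 2" using n by auto
    then have "\<bar>y 1 - y 2\<bar> \<in> DS" unfolding DS_def by blast
    then show ?thesis by auto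
  qed
  have dDS: "d = Min DS" unfolding d_def d_min_def DS_def ..
  have sep: "\<forall>p\<in>{1..n}. \<forall>q\<in>{1..n}. p \<noteq> q \<longrightarrow> \<bar>y p - y q\<bar> \<ge> d"
  proof (intro ballI impI)
    fix p q assume "p \<in> {1..n}" "q \<in> {1..n}" "p \<noteq> q"
    then have "\<bar>y p - y q\<bar> \<in> DS" unfolding DS_def by blast
    then show "\<bar>y p - y q\<bar> \<ge> d" unfolding dDS using DSfin by simp
  qed
  have d0: "d > 0"
  proof -
    have "d \<in> DS" unfolding dDS using DSfin DSne by (rule Min_in)
    then obtain p j where pj: "d = \<bar>y p - y j\<bar>" "p \<in> {1..n}" "j \<in> {1..n}" "p \<noteq> j"
      unfolding DS_def by blast
    then have "y p \<noteq> y j" using inj by (metis inj_onD)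
    then show ?thesis using pj by simp
  qed
  have mmle: "\<forall>j\<in>{1..n}. mm \<le> cmod (a j)"
  proof
    fix j assume "j \<in> {1..n}"
    then show "mm \<le> cmod (a j)" unfolding mm_def m_min_def by (intro Min_le) auto
  qed
  have mm0: "mm > 0"
  proof -
    have "mm \<in> (\<lambda>j. cmod (a j)) ` {1..n}" unfolding mm_def m_min_def
      by (rule Min_in) (use n in auto)
    then show ?thesis using anz by auto
  qed
  have S1le: "\<forall>q\<in>{1..M}. cmod (FT a y n (sample_pt \<Omega> M q) - Y q) \<le> S1"
    unfolding S1_def sup_dist_def by auto
  have S2le: "\<forall>q\<in>{1..M}. cmod (FT ah yh n (sample_pt \<Omega> M q) - Y q) \<le> S2"
    unfolding S2_def sup_dist_def by auto
  have oneM: "1 \<in> {1..M}" using M by simp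
  have S10: "S1 \<ge> 0" using S1le oneM norm_ge_zero order_trans by blast
  have sig: "\<sigma> > 0" using S10 S1s unfolding S1_def by simp
  have t0: "t > 0" using sig mm0 by (simp add: t_def)
  define s where "s = (M - 1) div (2*n - 1)"
  define H where "H = 2 * \<Omega> * real s / (real M - 1)"
  have k0: "2*n - 1 \<ge> 1" using n by simp
  have s_le: "s * (2*n-1) \<le> M - 1" unfolding s_def by (rule div_times_less_eq_dividend)
  have s1: "s \<ge> 1"
  proof -
    have "0 < (M - 1) div (2*n - 1)" using M k0 by (subst div_greater_zero_iff) auto
    then show ?thesis by (simp add: s_def)
  qed
  have s_ge: "M - 1 \<le> 2 * s * (2*n-1)"
  proof -
    have "(M - 1) div (2*n-1) * (2*n-1) + (M - 1) mod (2*n-1) = M - 1" by (rule div_mult_mod_eq)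
    moreover have "(M - 1) mod (2*n-1) < 2*n-1" using k0 by (intro mod_less_divisor) simp
    moreover have "2*n-1 \<le> s * (2*n-1)" using s1 by simp
    ultimately show ?thesis unfolding s_def by linarith
  qed
  have M1: "real M - 1 > 0" using M n by simp
  have rM1: "real (M - 1) = real M - 1" using M by (simp add: of_nat_diff)
  have rk: "real (2*n-1) = 2 * real n - 1" using n by (simp add: of_nat_diff)
  have s_le_r: "real s * (2 * real n - 1) \<le> real M - 1"
    using s_le rM1 rk by (metis of_nat_le_iff of_nat_mult)
  have s_ge_r: "real M - 1 \<le> 2 * real s * (2 * real n - 1)"
    using s_ge rM1 rk by (metis of_nat_le_iff of_nat_mult of_nat_numeral)
  have Hpos: "H > 0" using Om s1 M1 by (simp add: H_def)
  have Hup: "H * (2 * real n - 1) \<le> 2 * \<Omega>"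
  proof -
    have "H * (2 * real n - 1) = 2 * \<Omega> * (real s * (2 * real n - 1)) / (real M - 1)"
      by (simp add: H_def)
    also have "\<dots> \<le> 2 * \<Omega> * (real M - 1) / (real M - 1)"
      using s_le_r Om M1 by (intro divide_right_mono mult_left_mono) auto
    also have "\<dots> = 2 * \<Omega>" using M1 by simp
    finally show ?thesis .
  qed
  have Hlow: "\<Omega> \<le> H * (2 * real n - 1)"
  proof -
    have "\<Omega> = \<Omega> * (real M - 1) / (real M - 1)" using M1 by simp
    also have "\<dots> \<le> \<Omega> * (2 * real s * (2 * real n - 1)) / (real M - 1)"
      using s_ge_r Om M1 by (intro divide_right_mono mult_left_mono) auto
    also have "\<dots> = H * (2 * real n - 1)" by (simp add: H_def)
    finally show ?thesis .
  qed
  have Hn: "H * (real n - 1) \<le> \<Omega>" using Hup Hpos by (simp add: algebra_simps)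
  have Idist: "\<bar>u - v\<bar> \<le> (real n - 1) * pi / \<Omega>" if "u \<in> I_int n \<Omega>" "v \<in> I_int n \<Omega>" for u v
  proof -
    define c where "c = (real n - 1) * pi / (2 * \<Omega>)"
    have mc: "- (real n - 1) * pi / (2 * \<Omega>) = - c" unfolding c_def by (simp only: mult_minus_left divide_minus_left)
    have "- c \<le> u" "u \<le> c" "- c \<le> v" "v \<le> c" using that unfolding I_int_def mc c_def[symmetric] by auto
    then have "\<bar>u - v\<bar> \<le> 2 * c" by linarith
    then show ?thesis using Om by (simp add: c_def)
  qed
  have Hpi1: "\<bar>H * u - H * v\<bar> \<le> pi" if "u \<in> I_int n \<Omega>" "v \<in> I_int n \<Omega>" for u v
  proof -
    have "\<bar>H * u - H * v\<bar> = H * \<bar>u - v\<bar>" using Hpos by (simp add: right_diff_distrib[symmetric] abs_mult)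
    also have "\<dots> \<le> H * ((real n - 1) * pi / \<Omega>)" using Idist[OF that] Hpos by (intro mult_left_mono) auto
    also have "\<dots> = (H * (real n - 1)) * pi / \<Omega>" by simp
    also have "\<dots> \<le> \<Omega> * pi / \<Omega>" using Hn Om by (intro divide_right_mono mult_right_mono) auto
    also have "\<dots> = pi" using Om by simp
    finally show ?thesis .
  qed
  have Hpi: "\<forall>j\<in>{1..n}. \<forall>q\<in>{1..n}. \<bar>H * y j - H * yh q\<bar> \<le> pi \<and> \<bar>H * y j - H * y q\<bar> \<le> pi"
    using Hpi1 yI yhI by blast
  have pt: "sample_pt \<Omega> M (1 + s * r) = - \<Omega> + real r * H" for r
    unfolding sample_pt_def H_def using M1 by (simp add: field_simps)
  have Bnd: "\<forall>r\<le>2*n-1. cmod (FT ah yh n (- \<Omega> + real r * H) - FT a y n (- \<Omega> + real r * H)) \<le> S1 + S2"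
  proof (intro allI impI)
    fix r assume r: "r \<le> 2*n-1"
    have "s * r \<le> s * (2*n-1)" using r by (rule mult_le_mono2)
    then have "s * r \<le> M - 1" using s_le by (rule le_trans)
    then have q: "1 + s * r \<in> {1..M}" using M by auto
    have "cmod (FT ah yh n (- \<Omega> + real r * H) - FT a y n (- \<Omega> + real r * H))
        = cmod ((FT ah yh n (sample_pt \<Omega> M (1 + s * r)) - Y (1 + s*r)) - (FT a y n (sample_pt \<Omega> M (1 + s * r)) - Y (1 + s*r)))"
      unfolding pt by simp
    also have "\<dots> \<le> cmod (FT ah yh n (sample_pt \<Omega> M (1 + s * r)) - Y (1 + s*r)) + cmod (FT a y n (sample_pt \<Omega> M (1 + s * r)) - Y (1 + s*r))"
      by (rule norm_triangle_ineq4)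
    also have "\<dots> \<le> S2 + S1" using S1le S2le q by (intro add_mono) auto
    finally show "cmod (FT ah yh n (- \<Omega> + real r * H) - FT a y n (- \<Omega> + real r * H)) \<le> S1 + S2" by simp
  qed
  have key: "cmod (a j) * ((2*H/pi)^(2*n-1) * (\<bar>\<Prod>q\<in>{1..n}. y j - yh q\<bar> * \<bar>\<Prod>p\<in>{1..n}-{j}. y j - y p\<bar>)) \<le> 2^(2*n-1) * (S1 + S2)"
    if j: "j \<in> {1..n}" for j
    by (rule key_ineq[OF n Hpi Hpos Bnd j])
  define K where "K = 4^n * t * (pi * (2*real n - 1) / (2*\<Omega>))^(2*n-1)"
  have kpos: "2 * real n - 1 > 0" using n by simp
  define c0 where "c0 = (2*\<Omega> / (pi * (2*real n - 1)))^(2*n-1)"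
  have c0pos: "c0 > 0" using Om kpos by (simp add: c0_def)
  have c0le: "c0 \<le> (2*H/pi)^(2*n-1)"
  proof -
    have "\<Omega> / (2*real n - 1) \<le> H" using Hlow kpos by (simp add: divide_le_eq)
    then have "2/pi * (\<Omega> / (2*real n - 1)) \<le> 2/pi * H" by (intro mult_left_mono) auto
    then have "2*\<Omega> / (pi * (2*real n - 1)) \<le> 2*H/pi" by simp
    then show ?thesis unfolding c0_def using Om kpos by (intro power_mono) auto
  qed
  have p4: "(2::real)^(2*n-1) * 2 = 4^n"
  proof -
    have "Suc (2*n-1) = 2*n" using n by simp
    then have "(2::real)^(2*n-1) * 2 = 2^(2*n)" by (metis power_Suc mult.commute)
    also have "\<dots> = 4^n" by (simp add: power_mult)
    finally show ?thesis .
  qed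
  have Kc0: "K = 4^n * \<sigma> / (mm * c0)"
  proof -
    have "(pi * (2*real n - 1) / (2*\<Omega>))^(2*n-1) = 1 / c0"
      unfolding c0_def by (simp add: power_divide)
    then show ?thesis unfolding K_def t_def by simp
  qed
  have hK: "\<forall>j\<in>{1..n}. \<bar>\<Prod>q\<in>{1..n}. y j - yh q\<bar> * \<bar>\<Prod>p\<in>{1..n}-{j}. y j - y p\<bar> \<le> K"
  proof
    fix j assume j: "j \<in> {1..n}"
    define P where "P = \<bar>\<Prod>q\<in>{1..n}. y j - yh q\<bar> * \<bar>\<Prod>p\<in>{1..n}-{j}. y j - y p\<bar>"
    have P0: "P \<ge> 0" by (simp add: P_def)
    have "mm * (c0 * P) \<le> cmod (a j) * ((2*H/pi)^(2*n-1) * P)"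
      using mmle j c0le P0 mm0 c0pos by (intro mult_mono) auto
    also have "\<dots> \<le> 2^(2*n-1) * (S1 + S2)" using key[OF j] unfolding P_def .
    also have "\<dots> \<le> 2^(2*n-1) * (2 * \<sigma>)" using S1s S2s unfolding S1_def[symmetric] S2_def[symmetric] by simp
    also have "\<dots> = 4^n * \<sigma>" using p4 by (simp add: algebra_simps)
    finally have "(mm * c0) * P \<le> 4^n * \<sigma>" by (simp add: mult.assoc)
    then have "P \<le> 4^n * \<sigma> / (mm * c0)" using mm0 c0pos by (simp add: pos_le_divide_eq mult.commute)
    then show "\<bar>\<Prod>q\<in>{1..n}. y j - yh q\<bar> * \<bar>\<Prod>p\<in>{1..n}-{j}. y j - y p\<bar> \<le> K" unfolding Kc0 P_def .
  qed
  define eps where "eps = (\<Sum>j\<in>{1..n}. \<bar>\<Prod>q\<in>{1..n}. y j - yh q\<bar> / \<bar>\<Prod>p\<in>{1..n}-{j}. y j - y p\<bar>)"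
  define Cb where "Cb = real ((2*(n-1)) choose (n-1))"
  have epsK: "eps \<le> K * Cb / ((fact (n-1))^2 * d^(2*(n-1)))"
    unfolding eps_def Cb_def by (rule eps_bound[OF n1 sep d0 hK])
  define CC where "CC = C_const n * pi^(2*n-2)"
  define LB where "LB = 4 ^ n * (pi * (2 * real n - 1) / 2) ^ (2*n-1) * Cb / (fact (n-1))^2"
  have LBle: "LB \<le> CC" unfolding LB_def CC_def Cb_def by (rule num_B[OF n])
  have KLB: "K * Cb / ((fact (n-1))^2 * d^(2*(n-1))) = t * LB / (\<Omega>^(2*n-1) * d^(2*n-2))"
  proof -
    have e1: "(pi * (2*real n - 1) / (2*\<Omega>))^(2*n-1) = (pi * (2 * real n - 1) / 2) ^ (2*n-1) / \<Omega>^(2*n-1)"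
      by (simp add: power_divide)
    have e2: "2*(n-1) = 2*n-2" by simp
    show ?thesis unfolding K_def LB_def e1 e2 by (simp add: mult_ac)
  qed
  have epsB0: "eps \<le> t * CC / (\<Omega>^(2*n-1) * d^(2*n-2))"
  proof -
    have "t * LB / (\<Omega>^(2*n-1) * d^(2*n-2)) \<le> t * CC / (\<Omega>^(2*n-1) * d^(2*n-2))"
      using LBle t0 Om d0 by (intro divide_right_mono mult_left_mono) auto
    then show ?thesis using epsK KLB by simp
  qed
  have Bform: "t * CC / (\<Omega>^(2*n-1) * d^(2*n-2)) = C_const n / \<Omega> * (pi / (\<Omega> * d)) ^ (2 * n - 2) * t"
  proof -
    have "\<Omega>^(2*n-1) = \<Omega> * \<Omega>^(2*n-2)"
    proof -
      have "2*n-1 = Suc (2*n-2)" using n by simp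
      then show ?thesis by simp
    qed
    then show ?thesis unfolding CC_def by (simp add: power_divide power_mult_distrib mult_ac)
  qed
  have epsB: "eps \<le> C_const n / \<Omega> * (pi / (\<Omega> * d)) ^ (2 * n - 2) * t"
    using epsB0 Bform by simp
  define cc where "cc = 5.88 * pi * exp 1"
  have cc0: "cc > 0" by (simp add: cc_def)
  have tle: "t \<le> (d * \<Omega> / cc)^(2*n-1)"
  proof -
    have h1: "cc / \<Omega> * t powr (1 / (2 * real n - 1)) \<le> d"
      using hyp unfolding cc_def t_def d_def mm_def by simp
    then have h2: "t powr (1 / (2 * real n - 1)) \<le> d * \<Omega> / cc"
      using Om cc0 by (simp add: field_simps)
    have "t = (t powr (1 / (2 * real n - 1))) powr (2 * real n - 1)"
      using t0 kpos by (simp add: powr_powr)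
    also have "\<dots> = (t powr (1 / (2 * real n - 1))) ^ (2*n-1)"
      using t0 rk by (subst powr_realpow[symmetric]) simp_all
    also have "\<dots> \<le> (d * \<Omega> / cc)^(2*n-1)"
      using h2 by (intro power_mono) auto
    finally show ?thesis .
  qed
  have epsA: "eps < d / 2"
  proof -
    have CC0: "CC \<ge> 0" unfolding CC_def C_const_def by simp
    have "t * CC / (\<Omega>^(2*n-1) * d^(2*n-2)) \<le> (d * \<Omega> / cc)^(2*n-1) * CC / (\<Omega>^(2*n-1) * d^(2*n-2))"
      using tle CC0 Om d0 by (intro divide_right_mono mult_right_mono) auto
    also have "\<dots> = d * (CC / cc^(2*n-1))"
    proof -
      have "d^(2*n-1) = d * d^(2*n-2)"
      proof -
        have "2*n-1 = Suc (2*n-2)" using n by simp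
        then show ?thesis by simp
      qed
      then show ?thesis using Om d0 cc0 by (simp add: power_divide power_mult_distrib field_simps)
    qed
    also have "\<dots> < d * (1/2)"
      using num_A[OF n] d0 unfolding CC_def cc_def by (intro mult_strict_left_mono) auto
    finally have "t * CC / (\<Omega>^(2*n-1) * d^(2*n-2)) < d * (1/2)" .
    then show ?thesis using epsB0 by linarith
  qed
  define iv where "iv k = {y k - d/2 <..< y k + d/2}" for k
  have nearq: "\<exists>k\<in>{1..n}. \<bar>yh q - y k\<bar> \<le> eps" if q: "q \<in> {1..n}" for q
    unfolding eps_def by (rule near_some[OF inj n1 q])
  have inint: "\<exists>q\<in>{1..n}. yh q \<in> iv k" if k: "k \<in> {1..n}" for k
    unfolding iv_def by (rule root_in_interval[OF inj n1 k sep d0]) (use epsA in \<open>simp add: eps_def\<close>)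
  have uniq: "k = l" if "k \<in> {1..n}" "l \<in> {1..n}" "x \<in> iv k" "x \<in> iv l" for k l x
  proof (rule ccontr)
    assume "k \<noteq> l"
    then have "\<bar>y k - y l\<bar> \<ge> d" using sep that by blast
    moreover have "\<bar>y k - y l\<bar> < d" using that by (auto simp: iv_def abs_less_iff)
    ultimately show False by simp
  qed
  have nearin: "yh q \<in> iv k" if "\<bar>yh q - y k\<bar> \<le> eps" for q k
    using that epsA by (auto simp: iv_def abs_le_iff)
  have wn: "within_nbhd y n (d / 2) yh"
    unfolding within_nbhd_def
  proof (intro conjI ballI impI)
    fix k l assume "k \<in> {1..n}" "l \<in> {1..n}" "k \<noteq> l"
    then show "{y k - d / 2<..<y k + d / 2} \<inter> {y l - d / 2<..<y l + d / 2} = {}"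
      using uniq unfolding iv_def by blast
  next
    fix j assume j: "j \<in> {1..n}"
    obtain k where k: "k \<in> {1..n}" "\<bar>yh j - y k\<bar> \<le> eps" using nearq[OF j] by blast
    have "yh j \<in> iv k" using nearin[OF k(2)] .
    then show "\<exists>!k. k \<in> {1..n} \<and> yh j \<in> {y k - d / 2<..<y k + d / 2}"
      using k(1) uniq unfolding iv_def by blast
  qed
  define perm where "perm k = (SOME q. q \<in> {1..n} \<and> yh q \<in> iv k)" for k
  have permp: "perm k \<in> {1..n} \<and> yh (perm k) \<in> iv k" if k: "k \<in> {1..n}" for k
  proof -
    have "\<exists>q. q \<in> {1..n} \<and> yh q \<in> iv k" using inint[OF k] by blast
    then show ?thesis unfolding perm_def by (rule someI_ex)
  qed
  have pinj: "inj_on perm {1..n}"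
  proof (rule inj_onI)
    fix k l assume k: "k \<in> {1..n}" and l: "l \<in> {1..n}" and e: "perm k = perm l"
    have "yh (perm k) \<in> iv k" "yh (perm k) \<in> iv l" using permp[OF k] permp[OF l] e by auto
    then show "k = l" using uniq k l by blast
  qed
  have psub: "perm ` {1..n} \<subseteq> {1..n}" using permp by auto
  have "card (perm ` {1..n}) = card {1..n}" using card_image[OF pinj] .
  then have pim: "perm ` {1..n} = {1..n}" using psub by (intro card_subset_eq) auto
  have pbij: "bij_betw perm {1..n} {1..n}" unfolding bij_betw_def using pinj pim by simp
  have pbound: "\<bar>yh (perm k) - y k\<bar> \<le> C_const n / \<Omega> * (pi / (\<Omega> * d)) ^ (2 * n - 2) * t"
    if k: "k \<in> {1..n}" for k
  proof -
    obtain k' where k': "k' \<in> {1..n}" "\<bar>yh (perm k) - y k'\<bar> \<le> eps"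
      using nearq permp[OF k] by blast
    have "yh (perm k) \<in> iv k'" using nearin[OF k'(2)] .
    then have "k' = k" using uniq k'(1) k permp[OF k] by blast
    then show ?thesis using k'(2) epsB by simp
  qed
  show ?thesis unfolding d_def[symmetric] mm_def[symmetric] t_def[symmetric]
    using wn pbij pbound by blast
qed


end
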